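(* Let $X$ be the AR($p$)-process with coefficients $(a_1,\dots,a_p)$ such that all (complex) roots of the characteristic polynomial $f_p(z)=z^p-\sum_{k=1}^pa_kz^{p-k}$ have modulus strictly less than $1$. Assume $\mathbb{E}[Y_1]=0$ and $|Y_1|\le M<\infty$ a.s. Then there is $x_0\ge0$ such that for all $x\ge x_0$, $$\mathbb{P}\Big(\sup_{n=1,\dots,N}\sum_{k=1}^nX_k\le x\Big)\asymp N^{-1/2},\quad N\to\infty.$$
   Context: Let $(Y_n)_{n\ge1}$ be i.i.d. nondegenerate real random variables. The AR($p$)-process is $X_n=\sum_{k=1}^pa_kX_{n-k}+Y_n$ for $n\ge1$ with $X_n=0$ for $n\le0$. $f\asymp g$ means $0<\liminf f/g\le\limsup f/g<\infty$. *)

theory Defs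
  imports "HOL-Probability.Probability" "HOL-Library.Landau_Symbols"
begin

text \<open>AR(p) process driven by the innovations Y (indices n \<ge> 1), with coefficients a 1, ..., a p,
  and X n = 0 for n \<le> 0 (only X 0 is represented; terms X (n-k) with k \<ge> n vanish).\<close>
definition is_AR_process ::
  "nat \<Rightarrow> (nat \<Rightarrow> real) \<Rightarrow> (nat \<Rightarrow> 'a \<Rightarrow> real) \<Rightarrow> (nat \<Rightarrow> 'a \<Rightarrow> real) \<Rightarrow> bool" where
  "is_AR_process p a Y X \<longleftrightarrow>
     (\<forall>\<omega>. X 0 \<omega> = 0) \<and>
     (\<forall>n\<ge>1. \<forall>\<omega>. X n \<omega> = (\<Sum>k=1..p. a k * (if k < n then X (n - k) \<omega> else 0)) + Y n \<omega>)"

definition char_poly_AR :: "nat \<Rightarrow> (nat \<Rightarrow> real) \<Rightarrow> complex \<Rightarrow> complex" where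
  "char_poly_AR p a z = z ^ p - (\<Sum>k=1..p. complex_of_real (a k) * z ^ (p - k))"

end

theory Submission
  imports Defs "HOL-Computational_Algebra.Polynomial_FPS" "HOL-Computational_Algebra.Fundamental_Theorem_Algebra"
begin


unbundle no vec_syntax
unbundle fps_syntax

definition ba :: "complex fps \<Rightarrow> bool" where
  "ba f \<longleftrightarrow> (\<exists>A. \<forall>n. (\<Sum>i\<le>n. cmod (f $ i)) \<le> A)"

lemma ba_mult:
  assumes "ba f" "ba g" shows "ba (f * g)"
proof -
  obtain A where A: "\<And>n. (\<Sum>i\<le>n. cmod (f $ i)) \<le> A" using assms(1) unfolding ba_def by blast
  obtain B where B: "\<And>n. (\<Sum>i\<le>n. cmod (g $ i)) \<le> B" using assms(2) unfolding ba_def by blast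
  have A0: "A \<ge> 0" using A[of 0] by (meson norm_ge_zero order_trans sum_nonneg)
  have B0: "B \<ge> 0" using B[of 0] by (meson norm_ge_zero order_trans sum_nonneg)
  have "(\<Sum>n\<le>N. cmod ((f*g) $ n)) \<le> A * B" for N
  proof -
    have "(\<Sum>n\<le>N. cmod ((f*g) $ n)) \<le> (\<Sum>n\<le>N. \<Sum>i\<le>n. cmod (f$i) * cmod (g$(n-i)))"
      unfolding fps_mult_nth
      by (intro sum_mono) (auto simp: atLeast0AtMost norm_mult intro: order_trans[OF norm_sum])
    also have "\<dots> = (\<Sum>(i,j)\<in>{(i,j). i+j \<le> N}. cmod (f$i) * cmod (g$j))"
      by (rule sum.triangle_reindex_eq[symmetric])
    also have "\<dots> \<le> (\<Sum>(i,j)\<in>{..N}\<times>{..N}. cmod (f$i) * cmod (g$j))"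
      by (intro sum_mono2) auto
    also have "\<dots> = (\<Sum>i\<le>N. cmod (f$i)) * (\<Sum>j\<le>N. cmod (g$j))"
      by (simp add: sum_product sum.cartesian_product)
    also have "\<dots> \<le> A * B"
      by (intro mult_mono A B A0) (auto intro: sum_nonneg)
    finally show ?thesis .
  qed
  then show ?thesis unfolding ba_def by blast
qed

lemma ba_one: "ba 1"
proof -
  have "(\<Sum>i\<le>n. cmod (fps_nth (1::complex fps) i)) = 1" for n
  proof -
    have "(\<Sum>i\<le>n. cmod (fps_nth (1::complex fps) i)) = (\<Sum>i\<le>n. (if i = 0 then 1 else 0))"
      by (intro sum.cong) (auto simp: fps_one_nth)
    also have "\<dots> = 1" by simp
    finally show ?thesis .
  qed
  then show ?thesis unfolding ba_def by (intro exI[of _ 1]) simp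
qed

lemma ba_geo:
  assumes "cmod r < 1" shows "ba (Abs_fps (\<lambda>n. r ^ n))"
proof -
  have "(\<Sum>i\<le>n. cmod (r ^ i)) \<le> 1 / (1 - cmod r)" for n
  proof -
    have "(1 - cmod r) * (\<Sum>i\<le>n. cmod r ^ i) = 1 - cmod r ^ Suc n" by (rule sum_gp_basic)
    also have "\<dots> \<le> 1" by simp
    finally show ?thesis using assms by (simp add: norm_power field_simps mult.commute)
  qed
  then show ?thesis unfolding ba_def by auto
qed

lemma ba_poly: "ba (fps_of_poly q)"
proof -
  have "(\<Sum>i\<le>n. cmod (coeff q i)) \<le> (\<Sum>i\<le>degree q. cmod (coeff q i))" for n
  proof (cases "n \<le> degree q")
    case True then show ?thesis by (intro sum_mono2) auto
  next
    case False
    then have "(\<Sum>i\<le>n. cmod (coeff q i)) = (\<Sum>i\<le>degree q. cmod (coeff q i))"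
      by (intro sum.mono_neutral_right) (auto simp: coeff_eq_0)
    then show ?thesis by simp
  qed
  then show ?thesis unfolding ba_def by auto
qed

lemma geo_inv: "fps_of_poly [:1, -r:] * Abs_fps (\<lambda>n. r ^ n) = (1 :: complex fps)"
proof -
  have "fps_of_poly [:1, -r:] = 1 - fps_const r * fps_X"
    by (rule fps_ext) (auto simp: coeff_pCons fps_mult_left_const_nth split: nat.split)
  moreover have "(1 - fps_const r * fps_X) * Abs_fps (\<lambda>n. r ^ n) = (1 :: complex fps)"
  proof (rule fps_ext)
    fix n
    show "((1 - fps_const r * fps_X) * Abs_fps (\<lambda>n. r ^ n)) $ n = (1::complex fps) $ n"
      by (cases n) (simp_all add: algebra_simps mult.assoc)
  qed
  ultimately show ?thesis by (simp only:)
qed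

definition Fc :: "nat \<Rightarrow> (nat \<Rightarrow> real) \<Rightarrow> complex poly" where
  "Fc p a = monom 1 p - (\<Sum>k=1..p. monom (complex_of_real (a k)) (p - k))"

lemma poly_Fc: "poly (Fc p a) z = char_poly_AR p a z"
  by (simp add: Fc_def char_poly_AR_def poly_monom poly_sum)

lemma coeff_Fc: "coeff (Fc p a) i = (if i = p then 1 else if i < p then - of_real (a (p - i)) else 0)"
proof -
  have "(\<Sum>k=1..p. coeff (monom (complex_of_real (a k)) (p - k)) i)
        = (\<Sum>k=1..p. if i < p then (if k = p - i then complex_of_real (a k) else 0) else 0)"
    by (intro sum.cong) (auto simp: coeff_monom)
  also have "\<dots> = (if i < p then of_real (a (p - i)) else 0)"
    by (cases "i < p") (simp_all add: sum.delta')
  finally show ?thesis by (simp add: Fc_def coeff_diff coeff_sum coeff_monom)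
qed

lemma degree_Fc: "degree (Fc p a) = p"
proof (rule antisym)
  show "degree (Fc p a) \<le> p" by (rule degree_le) (auto simp: coeff_Fc)
  show "p \<le> degree (Fc p a)" by (rule le_degree) (simp add: coeff_Fc)
qed

lemma lead_Fc: "lead_coeff (Fc p a) = 1"
  by (simp add: degree_Fc coeff_Fc)

lemma coeff_G: "coeff (reflect_poly (Fc p a)) i = of_real (if i = 0 then 1 else if i \<le> p then - a i else 0)"
  by (auto simp: coeff_reflect_poly degree_Fc coeff_Fc)

lemma refl_lin: "reflect_poly [:-r, 1:] = [:1, -r::complex:]"
  by (intro poly_eqI) (auto simp: coeff_reflect_poly coeff_pCons split: nat.split)

lemma psi_exists:
  assumes roots: "\<And>z. char_poly_AR p a z = 0 \<Longrightarrow> cmod z < 1"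
  shows "\<exists>\<psi>. ba \<psi> \<and> fps_of_poly (reflect_poly (Fc p a)) * \<psi> = 1"
proof -
  obtain root where R: "smult (lead_coeff (Fc p a)) (\<Prod>i<degree (Fc p a). [:-root i, 1:]) = Fc p a"
    by (rule complex_poly_decompose')
  hence R': "Fc p a = (\<Prod>i<p. [:-root i,1:])" by (simp add: degree_Fc coeff_Fc)
  have rt: "cmod (root i) < 1" if "i < p" for i
  proof -
    have "poly (Fc p a) (root i) = 0" using that by (auto simp: R' poly_prod)
    then show ?thesis using roots by (simp add: poly_Fc)
  qed
  have G: "reflect_poly (Fc p a) = (\<Prod>i<p. [:1, -root i:])"
    by (simp add: R' reflect_poly_prod refl_lin)
  define \<psi> where "\<psi> = (\<Prod>i<p. Abs_fps (\<lambda>n. root i ^ n))"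
  have "fps_of_poly (reflect_poly (Fc p a)) * \<psi> = (\<Prod>i<p. fps_of_poly [:1,-root i:] * Abs_fps (\<lambda>n. root i ^ n))"
    by (simp add: G fps_of_poly_prod \<psi>_def prod.distrib)
  also have "\<dots> = 1" by (simp add: geo_inv)
  finally have e: "fps_of_poly (reflect_poly (Fc p a)) * \<psi> = 1" .
  have "m \<le> p \<longrightarrow> ba (\<Prod>i<m. Abs_fps (\<lambda>n. root i ^ n))" for m
    by (induction m) (auto simp: ba_one intro!: ba_mult ba_geo rt)
  then have "ba \<psi>" unfolding \<psi>_def by simp
  with e show ?thesis by blast
qed

lemma c_pos:
  assumes roots: "\<And>z. char_poly_AR p a z = 0 \<Longrightarrow> cmod z < 1"
  shows "1 - (\<Sum>k=1..p. a k) > 0"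
proof -
  define \<phi> where "\<phi> t = t^p - (\<Sum>k=1..p. a k * t^(p-k))" for t :: real
  have of: "char_poly_AR p a (of_real t) = of_real (\<phi> t)" for t
    by (simp add: char_poly_AR_def \<phi>_def)
  have nz: "\<phi> t \<noteq> 0" if "t \<ge> 1" for t
  proof
    assume "\<phi> t = 0"
    then have "cmod (of_real t) < 1" using roots[of "of_real t"] by (simp add: of)
    with that show False by simp
  qed
  define T where "T = 1 + (\<Sum>k=1..p. \<bar>a k\<bar>)"
  have T1: "T \<ge> 1" unfolding T_def by (simp add: sum_nonneg)
  have posT: "\<phi> T > 0"
  proof (cases "p = 0")
    case True then show ?thesis by (simp add: \<phi>_def)
  next
    case False
    have "(\<Sum>k=1..p. a k * T^(p-k)) \<le> (\<Sum>k=1..p. \<bar>a k\<bar> * T^(p-1))"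
    proof (intro sum_mono)
      fix k assume k: "k \<in> {1..p}"
      have "a k * T^(p-k) \<le> \<bar>a k\<bar> * T^(p-k)" using T1 by (intro mult_right_mono) auto
      also have "\<dots> \<le> \<bar>a k\<bar> * T^(p-1)" using T1 k by (intro mult_left_mono power_increasing) auto
      finally show "a k * T^(p-k) \<le> \<bar>a k\<bar> * T^(p-1)" .
    qed
    also have "\<dots> = (T - 1) * T^(p-1)" by (simp add: T_def sum_distrib_right)
    also have "\<dots> < T * T^(p-1)" using T1 by (simp add: algebra_simps)
    also have "\<dots> = T^p" using False by (simp add: power_eq_if)
    finally show ?thesis by (simp add: \<phi>_def)
  qed
  have "\<phi> 1 > 0"
  proof (rule ccontr)
    assume "\<not> \<phi> 1 > 0"
    then have "\<phi> 1 \<le> 0" by simp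
    moreover have "\<forall>t. 1 \<le> t \<and> t \<le> T \<longrightarrow> isCont \<phi> t" unfolding \<phi>_def by (intro allI impI continuous_intros)
    ultimately obtain t where "1 \<le> t" "t \<le> T" "\<phi> t = 0" using IVT[of \<phi> 1 0 T] posT T1 by auto
    with nz show False by auto
  qed
  then show ?thesis by (simp add: \<phi>_def)
qed

lemma AR_coef_identity:
  fixes x u :: "nat \<Rightarrow> real"
  assumes rec: "\<forall>n\<ge>1. x n = (\<Sum>k=1..p. a k * (if k < n then x (n-k) else 0)) + u n"
  shows "(\<Sum>i=0..n. (if i = 0 then 1 else if i \<le> p then - a i else 0) * x (Suc (n - i))) = u (Suc n)"
proof -
  have "(\<Sum>i=0..n. (if i = 0 then 1 else if i \<le> p then - a i else 0) * x (Suc (n - i)))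
     = x (Suc n) + (\<Sum>i=Suc 0..n. (if i = 0 then 1 else if i \<le> p then - a i else 0) * x (Suc (n - i)))"
    by (subst sum.atLeast_Suc_atMost) auto
  also have "(\<Sum>i=Suc 0..n. (if i = 0 then 1 else if i \<le> p then - a i else 0) * x (Suc (n - i)))
      = - (\<Sum>i\<in>{i\<in>{1..n}. i \<le> p}. a i * x (Suc (n - i)))"
    by (subst sum.inter_filter) (auto simp: sum_negf[symmetric] intro!: sum.cong)
  also have "{i\<in>{1..n}. i \<le> p} = {k\<in>{1..p}. k < Suc n}" by auto
  also have "(\<Sum>i\<in>{k\<in>{1..p}. k < Suc n}. a i * x (Suc (n - i)))
      = (\<Sum>k=1..p. a k * (if k < Suc n then x (Suc n - k) else 0))"
  proof -
    have "(\<Sum>k=1..p. a k * (if k < Suc n then x (Suc n - k) else 0))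
        = (\<Sum>k=1..p. if k < Suc n then a k * x (Suc (n - k)) else 0)"
      by (intro sum.cong) (auto simp: Suc_diff_le)
    also have "\<dots> = (\<Sum>i\<in>{k\<in>{1..p}. k < Suc n}. a i * x (Suc (n - i)))"
      by (rule sum.inter_filter[symmetric]) simp
    finally show ?thesis by simp
  qed
  finally show ?thesis using rec[rule_format, of "Suc n"] by simp
qed

lemma AR_decomp:
  assumes roots: "\<And>z. char_poly_AR p a z = 0 \<Longrightarrow> cmod z < 1"
  shows "\<exists>D\<ge>0. \<forall>(x::nat\<Rightarrow>real) u B. x 0 = 0 \<longrightarrow>
     (\<forall>n\<ge>1. x n = (\<Sum>k=1..p. a k * (if k < n then x (n-k) else 0)) + u n) \<longrightarrow>
     (\<forall>n\<ge>1. \<bar>u n\<bar> \<le> B) \<longrightarrow>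
     (\<forall>n. \<bar>(1 - (\<Sum>k=1..p. a k)) * (\<Sum>k=1..n. x k) - (\<Sum>k=1..n. u k)\<bar> \<le> D * B)"
proof -
  define G where "G = reflect_poly (Fc p a)"
  obtain \<psi> where \<psi>: "ba \<psi>" "fps_of_poly G * \<psi> = 1" using psi_exists[OF roots] G_def by blast
  define c where "c = 1 - (\<Sum>k=1..p. a k)"
  define C where "C = complex_of_real c"
  have "poly G 1 = C"
    using poly_reflect_poly_nz[of 1 "Fc p a"]
    by (simp add: G_def C_def c_def poly_Fc char_poly_AR_def)
  then have "poly (G - [:C:]) 1 = 0" by simp
  then have "[:-1,1:] dvd (G - [:C:])" using poly_eq_0_iff_dvd by (metis)
  then obtain H where H: "G - [:C:] = [:-1,1:] * H" by (elim dvdE)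
  have lin: "fps_of_poly [:-1,1:] = fps_X - (1::complex fps)"
    by (rule fps_ext) (auto simp: coeff_pCons split: nat.split)
  have GH: "fps_of_poly G = fps_const C + (fps_X - 1) * fps_of_poly H"
  proof -
    have "G = [:C:] + [:-1,1:] * H" using H by (simp add: algebra_simps)
    then show ?thesis by (simp add: fps_of_poly_add fps_of_poly_mult fps_of_poly_const lin)
  qed
  obtain A where A: "\<And>n. (\<Sum>i\<le>n. cmod ((fps_of_poly H * \<psi>) $ i)) \<le> A"
    using ba_mult[OF ba_poly \<psi>(1)] unfolding ba_def by blast
  have A0: "A \<ge> 0" using A[of 0] by (meson norm_ge_zero order_trans sum_nonneg)
  have coefG: "coeff G i = of_real (if i = 0 then 1 else if i \<le> p then - a i else 0)" for i
    by (simp add: G_def coeff_G)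
  show ?thesis
  proof (intro exI[of _ A] conjI A0 allI impI)
    fix x u :: "nat \<Rightarrow> real" and B n
    assume x0: "x 0 = 0"
      and rec: "\<forall>n\<ge>1. x n = (\<Sum>k=1..p. a k * (if k < n then x (n-k) else 0)) + u n"
      and ub: "\<forall>n\<ge>1. \<bar>u n\<bar> \<le> B"
    have B0: "B \<ge> 0" using ub[rule_format, of 1] by simp
    define xf where "xf = Abs_fps (\<lambda>n. complex_of_real (x (Suc n)))"
    define uf where "uf = Abs_fps (\<lambda>n. complex_of_real (u (Suc n)))"
    define sf where "sf = Abs_fps (\<lambda>n. complex_of_real (\<Sum>k=1..Suc n. x k))"
    define wf where "wf = Abs_fps (\<lambda>n. complex_of_real (\<Sum>k=1..Suc n. u k))"
    have Gx: "fps_of_poly G * xf = uf"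
    proof (rule fps_ext)
      fix n
      have "(fps_of_poly G * xf) $ n = of_real (\<Sum>i=0..n. (if i = 0 then 1 else if i \<le> p then - a i else 0) * x (Suc (n - i)))"
        by (simp add: fps_mult_nth xf_def coefG)
      also have "\<dots> = uf $ n" using AR_coef_identity[OF rec] by (simp add: uf_def)
      finally show "(fps_of_poly G * xf) $ n = uf $ n" .
    qed
    have Sx: "(1 - fps_X) * sf = xf"
    proof (rule fps_ext)
      fix n show "((1 - fps_X) * sf) $ n = xf $ n"
        by (cases n) (simp_all add: algebra_simps sf_def xf_def sum.cl_ivl_Suc)
    qed
    have Wu: "(1 - fps_X) * wf = uf"
    proof (rule fps_ext)
      fix n show "((1 - fps_X) * wf) $ n = uf $ n"
        by (cases n) (simp_all add: algebra_simps wf_def uf_def sum.cl_ivl_Suc)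
    qed
    have "(1 - fps_X) * wf = (1 - fps_X) * (fps_of_poly G * sf)"
    proof -
      have "(1 - fps_X) * (fps_of_poly G * sf) = fps_of_poly G * ((1 - fps_X) * sf)"
        by (simp only: ac_simps)
      then show ?thesis by (simp only: Sx Gx Wu)
    qed
    moreover have "(1 - fps_X :: complex fps) \<noteq> 0"
    proof
      assume "(1 - fps_X :: complex fps) = 0"
      then have "(1 - fps_X :: complex fps) $ 0 = 0" by simp
      then show False by simp
    qed
    ultimately have wG: "wf = fps_of_poly G * sf" by simp
    have xu: "xf = \<psi> * uf"
    proof -
      have "xf = (fps_of_poly G * \<psi>) * xf" using \<psi>(2) by simp
      also have "\<dots> = \<psi> * uf" by (simp add: Gx[symmetric] ac_simps)
      finally show ?thesis .
    qed
    have key: "fps_const C * sf - wf = (fps_of_poly H * \<psi>) * uf"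
    proof -
      have "fps_const C * sf - wf = fps_of_poly H * ((1 - fps_X) * sf)"
        by (simp add: wG GH algebra_simps)
      also have "\<dots> = (fps_of_poly H * \<psi>) * uf" by (simp only: Sx xu mult.assoc)
      finally show ?thesis .
    qed
    show "\<bar>(1 - (\<Sum>k=1..p. a k)) * (\<Sum>k=1..n. x k) - (\<Sum>k=1..n. u k)\<bar> \<le> A * B"
    proof (cases n)
      case 0 then show ?thesis using A0 B0 by simp
    next
      case (Suc m)
      define K where "K = fps_of_poly H * \<psi>"
      have "complex_of_real (c * (\<Sum>k=1..Suc m. x k) - (\<Sum>k=1..Suc m. u k)) = (fps_const C * sf - wf) $ m"
        by (simp add: C_def sf_def wf_def)
      also have "\<dots> = (\<Sum>i=0..m. K $ i * of_real (u (Suc (m - i))))"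
        by (simp add: key K_def fps_mult_nth uf_def)
      finally have eq: "\<bar>c * (\<Sum>k=1..Suc m. x k) - (\<Sum>k=1..Suc m. u k)\<bar> = cmod (\<Sum>i=0..m. K $ i * of_real (u (Suc (m - i))))"
        by (metis norm_of_real)
      also have "\<dots> \<le> (\<Sum>i=0..m. cmod (K $ i) * B)"
        by (rule order_trans[OF norm_sum]) (auto intro!: sum_mono mult_left_mono simp: norm_mult ub)
      also have "\<dots> = (\<Sum>i\<le>m. cmod (K $ i)) * B" by (simp add: sum_distrib_right atLeast0AtMost)
      also have "\<dots> \<le> A * B" using A[of m] B0 by (simp add: K_def mult_right_mono)
      finally show ?thesis by (simp add: Suc c_def)
    qed
  qed
qed



locale rw = prob_space M for M :: "'a measure" +
  fixes Y :: "nat \<Rightarrow> 'a \<Rightarrow> real" and Mb :: real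
  assumes measY[measurable]: "\<And>n. Y n \<in> borel_measurable M"
    and indepY: "indep_vars (\<lambda>_. borel) Y {1..}"
    and identY: "\<And>n. n \<ge> 1 \<Longrightarrow> distr M borel (Y n) = distr M borel (Y 1)"
    and nondeg: "\<not> (\<exists>c. AE \<omega> in M. Y 1 \<omega> = c)"
    and mean0: "expectation (Y 1) = 0"
    and bddY: "AE \<omega> in M. \<bar>Y 1 \<omega>\<bar> \<le> Mb"
begin

definition s2 :: real where "s2 = expectation (\<lambda>\<omega>. (Y 1 \<omega>)\<^sup>2)"

lemma bddAE: "AE \<omega> in M. \<forall>k. k \<ge> 1 \<longrightarrow> \<bar>Y k \<omega>\<bar> \<le> Mb"
proof -
  have "AE \<omega> in M. k \<ge> 1 \<longrightarrow> \<bar>Y k \<omega>\<bar> \<le> Mb" for k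
  proof (cases "k \<ge> 1")
    case True
    have "AE x in distr M borel (Y 1). \<bar>x\<bar> \<le> Mb" using bddY by (subst AE_distr_iff) auto
    then have "AE x in distr M borel (Y k). \<bar>x\<bar> \<le> Mb" by (simp only: identY[OF True])
    then have "AE \<omega> in M. \<bar>Y k \<omega>\<bar> \<le> Mb" by (subst (asm) AE_distr_iff) auto
    then show ?thesis by auto
  qed simp
  then show ?thesis by (simp add: AE_all_countable)
qed

lemma Mb_nonneg: "Mb \<ge> 0"
proof (rule ccontr)
  assume a: "\<not> Mb \<ge> 0"
  have "AE \<omega> in M. False" using bddY by eventually_elim (use a in auto)
  then show False by (simp add: AE_False)
qed

lemma integrable_bdd:
  fixes f :: "'a \<Rightarrow> real"
  assumes "f \<in> borel_measurable M" "AE \<omega> in M. \<bar>f \<omega>\<bar> \<le> B"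
  shows "integrable M f"
  using assms by (intro integrable_const_bound[of _ B]) auto

lemma Y_same_exp:
  fixes f :: "real \<Rightarrow> real"
  assumes "k \<ge> 1" "f \<in> borel_measurable borel"
  shows "expectation (\<lambda>\<omega>. f (Y k \<omega>)) = expectation (\<lambda>\<omega>. f (Y 1 \<omega>))"
proof -
  have "expectation (\<lambda>\<omega>. f (Y k \<omega>)) = integral\<^sup>L (distr M borel (Y k)) f"
    by (subst integral_distr) (use assms in auto)
  also have "\<dots> = integral\<^sup>L (distr M borel (Y 1)) f" using identY[OF assms(1)] by simp
  also have "\<dots> = expectation (\<lambda>\<omega>. f (Y 1 \<omega>))"
    by (subst integral_distr) (use assms in auto)
  finally show ?thesis .
qed

lemma EY: "k \<ge> 1 \<Longrightarrow> expectation (Y k) = 0"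
  using Y_same_exp[of k "\<lambda>x. x"] mean0 by simp

lemma EY2: "k \<ge> 1 \<Longrightarrow> expectation (\<lambda>\<omega>. (Y k \<omega>)\<^sup>2) = s2"
  using Y_same_exp[of k "\<lambda>x. x\<^sup>2"] by (simp add: s2_def)

lemma Y_bdd_k: "k \<ge> 1 \<Longrightarrow> AE \<omega> in M. \<bar>Y k \<omega>\<bar> \<le> Mb"
  using bddAE by eventually_elim auto

lemma intY: "k \<ge> 1 \<Longrightarrow> integrable M (Y k)"
  by (rule integrable_bdd[OF measY Y_bdd_k])

lemma intY2: "k \<ge> 1 \<Longrightarrow> integrable M (\<lambda>\<omega>. (Y k \<omega>)\<^sup>2)"
proof -
  assume k: "k \<ge> 1"
  have "AE \<omega> in M. \<bar>(Y k \<omega>)\<^sup>2\<bar> \<le> Mb\<^sup>2"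
    using Y_bdd_k[OF k] by eventually_elim (use Mb_nonneg in \<open>metis abs_ge_zero abs_power2 power2_abs power_mono\<close>)
  then show ?thesis by (intro integrable_bdd) auto
qed

lemma s2_pos: "s2 > 0"
proof -
  have ge: "s2 \<ge> 0" unfolding s2_def by (intro integral_nonneg_AE) auto
  have "s2 \<noteq> 0"
  proof
    assume "s2 = 0"
    then have "AE \<omega> in M. (Y 1 \<omega>)\<^sup>2 = 0"
      using integral_nonneg_eq_0_iff_AE[OF intY2[of 1]] unfolding s2_def by auto
    then have "AE \<omega> in M. Y 1 \<omega> = 0" by eventually_elim auto
    with nondeg show False by blast
  qed
  with ge show ?thesis by simp
qed

definition past :: "nat \<Rightarrow> 'a \<Rightarrow> nat \<Rightarrow> real" where
  "past k \<omega> = (\<lambda>i\<in>{1..<k}. Y i \<omega>)"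

definition PM :: "nat \<Rightarrow> 'b measure \<Rightarrow> ('a \<Rightarrow> 'b) \<Rightarrow> bool" where
  "PM k N G \<longleftrightarrow> (\<exists>g\<in>measurable (PiM {1..<k} (\<lambda>_. borel)) N. G = (\<lambda>\<omega>. g (past k \<omega>)))"

lemma past_meas: "past k \<in> measurable M (PiM {1..<k} (\<lambda>_. borel))"
  unfolding past_def by (intro measurable_restrict) auto

lemma PM_meas: "PM k N G \<Longrightarrow> G \<in> measurable M N"
  unfolding PM_def using past_meas by (auto intro: measurable_comp[OF past_meas, unfolded comp_def])

lemma PM_const: "c \<in> space N \<Longrightarrow> PM k N (\<lambda>_. c)"
  unfolding PM_def by (intro bexI[of _ "\<lambda>_. c"]) auto

lemma PM_Y: "1 \<le> i \<Longrightarrow> i < k \<Longrightarrow> PM k borel (Y i)"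
  unfolding PM_def
  by (intro bexI[of _ "\<lambda>v. v i"]) (auto simp: past_def intro!: measurable_component_singleton)

lemma PM_mono:
  assumes "k \<le> k'" "PM k N G" shows "PM k' N G"
proof -
  obtain g where g: "g \<in> measurable (PiM {1..<k} (\<lambda>_. borel)) N" "G = (\<lambda>\<omega>. g (past k \<omega>))"
    using assms(2) unfolding PM_def by blast
  have r: "(\<lambda>v. restrict v {1..<k}) \<in> measurable (PiM {1..<k'} (\<lambda>_. borel)) (PiM {1..<k} (\<lambda>_. borel :: real measure))"
    using assms(1) by (intro measurable_restrict_subset) auto
  have "restrict (past k' \<omega>) {1..<k} = past k \<omega>" for \<omega>
    using assms(1) by (auto simp: past_def fun_eq_iff)
  moreover have "(\<lambda>v. g (restrict v {1..<k})) \<in> measurable (PiM {1..<k'} (\<lambda>_. borel)) N"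
    using measurable_comp[OF r g(1)] by (simp add: comp_def)
  ultimately show ?thesis unfolding PM_def
    by (intro bexI[of _ "\<lambda>v. g (restrict v {1..<k})"]) (auto simp: g(2))
qed

lemma PM_comb2:
  assumes "PM k N1 A" "PM k N2 B" "(\<lambda>(x,y). f x y) \<in> measurable (N1 \<Otimes>\<^sub>M N2) N"
  shows "PM k N (\<lambda>\<omega>. f (A \<omega>) (B \<omega>))"
proof -
  obtain gA where gA: "gA \<in> measurable (PiM {1..<k} (\<lambda>_. borel)) N1" "A = (\<lambda>\<omega>. gA (past k \<omega>))"
    using assms(1) unfolding PM_def by blast
  obtain gB where gB: "gB \<in> measurable (PiM {1..<k} (\<lambda>_. borel)) N2" "B = (\<lambda>\<omega>. gB (past k \<omega>))"
    using assms(2) unfolding PM_def by blast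
  have "(\<lambda>v. (gA v, gB v)) \<in> measurable (PiM {1..<k} (\<lambda>_. borel)) (N1 \<Otimes>\<^sub>M N2)"
    using gA(1) gB(1) by (rule measurable_Pair)
  from measurable_comp[OF this assms(3)]
  have "(\<lambda>v. f (gA v) (gB v)) \<in> measurable (PiM {1..<k} (\<lambda>_. borel)) N" by (simp add: comp_def)
  then show ?thesis unfolding PM_def by (intro bexI[of _ "\<lambda>v. f (gA v) (gB v)"]) (auto simp: gA(2) gB(2))
qed

lemma PM_comb1:
  assumes "PM k N1 A" "f \<in> measurable N1 N"
  shows "PM k N (\<lambda>\<omega>. f (A \<omega>))"
proof -
  obtain gA where gA: "gA \<in> measurable (PiM {1..<k} (\<lambda>_. borel)) N1" "A = (\<lambda>\<omega>. gA (past k \<omega>))"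
    using assms(1) unfolding PM_def by blast
  have "(\<lambda>v. f (gA v)) \<in> measurable (PiM {1..<k} (\<lambda>_. borel)) N"
    using measurable_comp[OF gA(1) assms(2)] by (simp add: comp_def)
  then show ?thesis unfolding PM_def
    by (intro bexI[of _ "\<lambda>v. f (gA v)"]) (auto simp: gA(2))
qed

lemma PM_add: "PM k borel A \<Longrightarrow> PM k borel B \<Longrightarrow> PM k borel (\<lambda>\<omega>. A \<omega> + B \<omega> :: real)"
  by (erule (1) PM_comb2) measurable

lemma PM_mult: "PM k borel A \<Longrightarrow> PM k borel B \<Longrightarrow> PM k borel (\<lambda>\<omega>. A \<omega> * B \<omega> :: real)"
  by (erule (1) PM_comb2) measurable

lemma PM_le: "PM k borel A \<Longrightarrow> PM k borel B \<Longrightarrow> PM k (count_space UNIV) (\<lambda>\<omega>. (A \<omega> :: real) \<le> B \<omega>)"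
  by (erule (1) PM_comb2) measurable

lemma PM_less: "PM k borel A \<Longrightarrow> PM k borel B \<Longrightarrow> PM k (count_space UNIV) (\<lambda>\<omega>. (A \<omega> :: real) < B \<omega>)"
  by (erule (1) PM_comb2) measurable

lemma PM_conj: "PM k (count_space UNIV) A \<Longrightarrow> PM k (count_space UNIV) B \<Longrightarrow> PM k (count_space UNIV) (\<lambda>\<omega>. A \<omega> \<and> B \<omega>)"
  by (erule (1) PM_comb2) measurable

lemma PM_not: "PM k (count_space UNIV) A \<Longrightarrow> PM k (count_space UNIV) (\<lambda>\<omega>. \<not> A \<omega>)"
  by (erule PM_comb1) measurable

lemma PM_ind: "PM k (count_space UNIV) A \<Longrightarrow> PM k borel (\<lambda>\<omega>. if A \<omega> then 1 else 0 :: real)"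
  by (erule PM_comb1) measurable

lemma PM_sum:
  assumes "finite S" "\<And>i. i \<in> S \<Longrightarrow> PM k borel (F i)"
  shows "PM k borel (\<lambda>\<omega>. \<Sum>i\<in>S. F i \<omega> :: real)"
  using assms by (induction S rule: finite_induct) (auto intro!: PM_add PM_const)

lemma PM_ball:
  assumes "finite S" "\<And>i. i \<in> S \<Longrightarrow> PM k (count_space UNIV) (P i)"
  shows "PM k (count_space UNIV) (\<lambda>\<omega>. \<forall>i\<in>S. P i \<omega>)"
  using assms by (induction S rule: finite_induct) (auto intro!: PM_conj PM_const)

lemma K:
  assumes k: "k \<ge> 1" and G: "PM k borel G" and iG: "integrable M G"
  shows "expectation (\<lambda>\<omega>. G \<omega> * Y k \<omega>) = 0"
    and "expectation (\<lambda>\<omega>. G \<omega> * (Y k \<omega>)\<^sup>2) = expectation G * s2"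
    and "integrable M (\<lambda>\<omega>. G \<omega> * Y k \<omega>)"
    and "integrable M (\<lambda>\<omega>. G \<omega> * (Y k \<omega>)\<^sup>2)"
proof -
  obtain g where g: "g \<in> borel_measurable (PiM {1..<k} (\<lambda>_. borel))" "G = (\<lambda>\<omega>. g (past k \<omega>))"
    using G unfolding PM_def by blast
  have ind: "indep_var (PiM {1..<k} (\<lambda>_. borel)) (\<lambda>\<omega>. restrict (\<lambda>i. Y i \<omega>) {1..<k})
      (PiM {k} (\<lambda>_. borel)) (\<lambda>\<omega>. restrict (\<lambda>i. Y i \<omega>) {k})"
    using k by (intro indep_var_restrict[OF indepY]) auto
  have c1: "(\<lambda>v. v k) \<in> borel_measurable (PiM {k} (\<lambda>_. borel :: real measure))"
    by (rule measurable_component_singleton) auto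
  have c2: "(\<lambda>v. (v k)\<^sup>2) \<in> borel_measurable (PiM {k} (\<lambda>_. borel :: real measure))"
    using c1 by measurable
  have i1: "indep_var borel G borel (Y k)"
    using indep_var_compose[OF ind g(1) c1] by (simp add: comp_def g(2) past_def)
  have i2: "indep_var borel G borel (\<lambda>\<omega>. (Y k \<omega>)\<^sup>2)"
    using indep_var_compose[OF ind g(1) c2] by (simp add: comp_def g(2) past_def)
  show "expectation (\<lambda>\<omega>. G \<omega> * Y k \<omega>) = 0"
    using indep_var_lebesgue_integral[OF i1 iG intY[OF k]] EY[OF k] by simp
  show "expectation (\<lambda>\<omega>. G \<omega> * (Y k \<omega>)\<^sup>2) = expectation G * s2"
    using indep_var_lebesgue_integral[OF i2 iG intY2[OF k]] EY2[OF k] by simp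
  show "integrable M (\<lambda>\<omega>. G \<omega> * Y k \<omega>)"
    using indep_var_integrable[OF i1 iG intY[OF k]] .
  show "integrable M (\<lambda>\<omega>. G \<omega> * (Y k \<omega>)\<^sup>2)"
    using indep_var_integrable[OF i2 iG intY2[OF k]] .
qed

definition BD :: "('a \<Rightarrow> real) \<Rightarrow> bool" where
  "BD f \<longleftrightarrow> f \<in> borel_measurable M \<and> (\<exists>B. AE \<omega> in M. \<bar>f \<omega>\<bar> \<le> B)"

lemma BD_int: "BD f \<Longrightarrow> integrable M f"
  unfolding BD_def using integrable_bdd by blast

lemma BD_meas: "BD f \<Longrightarrow> f \<in> borel_measurable M"
  unfolding BD_def by blast

lemma BD_bounded: "f \<in> borel_measurable M \<Longrightarrow> (\<And>\<omega>. \<bar>f \<omega>\<bar> \<le> B) \<Longrightarrow> BD f"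
  unfolding BD_def by auto

lemma BD_Y: "k \<ge> 1 \<Longrightarrow> BD (Y k)"
  unfolding BD_def using Y_bdd_k by auto

lemma BD_add: "BD f \<Longrightarrow> BD g \<Longrightarrow> BD (\<lambda>\<omega>. f \<omega> + g \<omega>)"
  unfolding BD_def
proof (elim conjE exE, intro conjI)
  fix B1 B2 assume "AE \<omega> in M. \<bar>f \<omega>\<bar> \<le> B1" "AE \<omega> in M. \<bar>g \<omega>\<bar> \<le> B2"
  then have "AE \<omega> in M. \<bar>f \<omega> + g \<omega>\<bar> \<le> B1 + B2" by eventually_elim auto
  then show "\<exists>B. AE \<omega> in M. \<bar>f \<omega> + g \<omega>\<bar> \<le> B" by blast
qed auto

lemma BD_mult: "BD f \<Longrightarrow> BD g \<Longrightarrow> BD (\<lambda>\<omega>. f \<omega> * g \<omega>)"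
  unfolding BD_def
proof (elim conjE exE, intro conjI)
  fix B1 B2 assume "AE \<omega> in M. \<bar>f \<omega>\<bar> \<le> B1" "AE \<omega> in M. \<bar>g \<omega>\<bar> \<le> B2"
  then have "AE \<omega> in M. \<bar>f \<omega> * g \<omega>\<bar> \<le> B1 * B2"
    by eventually_elim (simp add: abs_mult mult_mono')
  then show "\<exists>B. AE \<omega> in M. \<bar>f \<omega> * g \<omega>\<bar> \<le> B" by blast
qed auto

lemma BD_sum: "finite S \<Longrightarrow> (\<And>i. i \<in> S \<Longrightarrow> BD (F i)) \<Longrightarrow> BD (\<lambda>\<omega>. \<Sum>i\<in>S. F i \<omega>)"
proof (induction S rule: finite_induct)
  case empty then show ?case by (auto intro: BD_bounded[of _ 0])
next
  case (insert x S) then show ?case by (auto intro: BD_add)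
qed

definition adapted :: "(nat \<Rightarrow> 'a \<Rightarrow> real) \<Rightarrow> bool" where
  "adapted H \<longleftrightarrow> (\<forall>k\<ge>1. PM k borel (H k)) \<and> (\<forall>k \<omega>. \<bar>H k \<omega>\<bar> \<le> 1)"

definition mt :: "(nat \<Rightarrow> 'a \<Rightarrow> real) \<Rightarrow> nat \<Rightarrow> 'a \<Rightarrow> real" where
  "mt H n \<omega> = (\<Sum>k=1..n. H k \<omega> * Y k \<omega>)"

lemma adapted_BD: "adapted H \<Longrightarrow> k \<ge> 1 \<Longrightarrow> BD (H k)"
  unfolding adapted_def by (intro BD_bounded[of _ 1] PM_meas) auto

lemma mt_PM: assumes H: "adapted H" and nk: "n < k" shows "PM k borel (mt H n)"
proof -
  have "PM k borel (\<lambda>\<omega>. H i \<omega> * Y i \<omega>)" if i: "i \<in> {1..n}" for i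
  proof (rule PM_mult)
    have "\<forall>k\<ge>1. PM k borel (H k)" using H unfolding adapted_def by blast
    then have "PM i borel (H i)" using i by simp
    then show "PM k borel (H i)" by (rule PM_mono[rotated]) (use i nk in auto)
    show "PM k borel (Y i)" using i nk by (intro PM_Y) auto
  qed
  then show ?thesis unfolding mt_def
    by (rule PM_sum[where F="\<lambda>i \<omega>. H i \<omega> * Y i \<omega>", OF finite_atLeastAtMost])
qed

lemma mt_BD: assumes H: "adapted H" shows "BD (mt H n)"
  unfolding mt_def
proof (rule BD_sum[where F="\<lambda>i \<omega>. H i \<omega> * Y i \<omega>", OF finite_atLeastAtMost])
  fix i assume "i \<in> {1..n}"
  then show "BD (\<lambda>\<omega>. H i \<omega> * Y i \<omega>)" by (intro BD_mult adapted_BD[OF H] BD_Y) auto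
qed

lemma mt_Suc: "mt H (Suc n) \<omega> = mt H n \<omega> + H (Suc n) \<omega> * Y (Suc n) \<omega>"
  unfolding mt_def by simp

lemma mt_mean: "adapted H \<Longrightarrow> expectation (mt H n) = 0"
proof -
  assume H: "adapted H"
  have "expectation (mt H n) = (\<Sum>k=1..n. expectation (\<lambda>\<omega>. H k \<omega> * Y k \<omega>))"
    unfolding mt_def
    by (subst Bochner_Integration.integral_sum) (auto intro!: BD_int BD_mult adapted_BD[OF H] BD_Y)
  also have "\<dots> = 0"
  proof (intro sum.neutral ballI K(1))
    fix k assume k: "k \<in> {1..n}"
    then show "1 \<le> k" by simp
    show "PM k borel (H k)" using H k unfolding adapted_def by simp
    show "integrable M (H k)" using k by (intro BD_int adapted_BD[OF H]) simp
  qed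
  finally show ?thesis .
qed

lemma mt_sq: "adapted H \<Longrightarrow> expectation (\<lambda>\<omega>. (mt H n \<omega>)\<^sup>2) = s2 * (\<Sum>k=1..n. expectation (\<lambda>\<omega>. (H k \<omega>)\<^sup>2))"
proof (induction n)
  case 0 then show ?case by (simp add: mt_def)
next
  case (Suc n)
  note H = Suc.prems
  have PMH: "PM (Suc n) borel (H (Suc n))" using H unfolding adapted_def by simp
  have BDH: "BD (H (Suc n))" by (rule adapted_BD[OF H]) simp
  have G1: "PM (Suc n) borel (\<lambda>\<omega>. mt H n \<omega> * H (Suc n) \<omega>)"
    by (intro PM_mult mt_PM[OF H] PMH) simp
  have G2: "PM (Suc n) borel (\<lambda>\<omega>. (H (Suc n) \<omega>)\<^sup>2)"
    unfolding power2_eq_square by (intro PM_mult PMH)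
  have i1: "integrable M (\<lambda>\<omega>. mt H n \<omega> * H (Suc n) \<omega>)" by (intro BD_int BD_mult mt_BD H BDH)
  have i2: "integrable M (\<lambda>\<omega>. (H (Suc n) \<omega>)\<^sup>2)" unfolding power2_eq_square by (intro BD_int BD_mult BDH)
  have i0: "integrable M (\<lambda>\<omega>. (mt H n \<omega>)\<^sup>2)" unfolding power2_eq_square by (intro BD_int BD_mult mt_BD H)
  have eq: "(\<lambda>\<omega>. (mt H (Suc n) \<omega>)\<^sup>2) = (\<lambda>\<omega>. (mt H n \<omega>)\<^sup>2 + 2 * ((mt H n \<omega> * H (Suc n) \<omega>) * Y (Suc n) \<omega>)
      + (H (Suc n) \<omega>)\<^sup>2 * (Y (Suc n) \<omega>)\<^sup>2)"
    by (auto simp: mt_Suc power2_eq_square algebra_simps)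
  have "expectation (\<lambda>\<omega>. (mt H (Suc n) \<omega>)\<^sup>2) = expectation (\<lambda>\<omega>. (mt H n \<omega>)\<^sup>2)
      + 2 * expectation (\<lambda>\<omega>. (mt H n \<omega> * H (Suc n) \<omega>) * Y (Suc n) \<omega>)
      + expectation (\<lambda>\<omega>. (H (Suc n) \<omega>)\<^sup>2 * (Y (Suc n) \<omega>)\<^sup>2)"
    unfolding eq using i0 K(3)[OF _ G1 i1] K(4)[OF _ G2 i2] by simp
  also have "\<dots> = expectation (\<lambda>\<omega>. (mt H n \<omega>)\<^sup>2) + s2 * expectation (\<lambda>\<omega>. (H (Suc n) \<omega>)\<^sup>2)"
    using K(1)[OF _ G1 i1] K(2)[OF _ G2 i2] by simp
  finally show ?case using Suc.IH[OF H] by (simp add: algebra_simps)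
qed

lemma mt_split: "m \<le> N \<Longrightarrow> mt H N \<omega> = mt H m \<omega> + (\<Sum>k=Suc m..N. H k \<omega> * Y k \<omega>)"
proof -
  assume "m \<le> N"
  then obtain d where d: "N = m + d" using le_Suc_ex by blast
  show ?thesis unfolding mt_def d using sum.ub_add_nat[of 1 m "\<lambda>k. H k \<omega> * Y k \<omega>" d] by simp
qed

lemma kolm:
  assumes H: "adapted H" and c: "c > 0"
  shows "c\<^sup>2 * expectation (\<lambda>\<omega>. if \<exists>m\<in>{1..N}. c \<le> mt H m \<omega> then 1 else 0) \<le> expectation (\<lambda>\<omega>. (mt H N \<omega>)\<^sup>2)"
proof -
  define E where "E m \<omega> \<longleftrightarrow> c \<le> mt H m \<omega> \<and> (\<forall>j\<in>{1..<m}. mt H j \<omega> < c)" for m \<omega>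
  define I where "I m \<omega> = (if E m \<omega> then 1 else 0 :: real)" for m \<omega>
  have PMI: "PM k borel (I m)" if "m < k" for m k
  proof -
    have "PM k (count_space UNIV) (\<lambda>\<omega>. mt H j \<omega> < c)" if "j \<in> {1..<m}" for j
      using that \<open>m < k\<close> by (intro PM_less PM_const mt_PM[OF H]) auto
    then have "PM k (count_space UNIV) (\<lambda>\<omega>. \<forall>j\<in>{1..<m}. mt H j \<omega> < c)"
      by (intro PM_ball) auto
    moreover have "PM k (count_space UNIV) (\<lambda>\<omega>. c \<le> mt H m \<omega>)"
      using \<open>m < k\<close> by (intro PM_le PM_const mt_PM[OF H]) auto
    ultimately show ?thesis unfolding I_def E_def by (intro PM_ind PM_conj)
  qed
  have BDI: "BD (I m)" for m
    by (rule BD_bounded[of _ 1]) (auto simp: I_def intro: PM_meas[OF PMI[of m "Suc m"]])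
  have BDmt: "BD (mt H n)" for n by (rule mt_BD[OF H])
  have sumI: "(\<Sum>m=1..n. I m \<omega>) = (if \<exists>m\<in>{1..n}. c \<le> mt H m \<omega> then 1 else 0)" for n \<omega>
  proof (induction n)
    case 0 then show ?case by simp
  next
    case (Suc n)
    show ?case
    proof (cases "\<exists>m\<in>{1..n}. c \<le> mt H m \<omega>")
      case True
      then obtain m where m: "m \<in> {1..n}" "c \<le> mt H m \<omega>" by blast
      then have "m \<in> {1..<Suc n}" "\<not> mt H m \<omega> < c" by auto
      then have "\<not> E (Suc n) \<omega>" unfolding E_def by blast
      then have "I (Suc n) \<omega> = 0" by (simp add: I_def)
      then show ?thesis using Suc True by auto
    next
      case False
      then have "I (Suc n) \<omega> = (if c \<le> mt H (Suc n) \<omega> then 1 else 0)"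
        by (auto simp: I_def E_def not_le)
      moreover have "(\<exists>m\<in>{1..Suc n}. c \<le> mt H m \<omega>) \<longleftrightarrow> c \<le> mt H (Suc n) \<omega>"
      proof
        assume "c \<le> mt H (Suc n) \<omega>"
        then show "\<exists>m\<in>{1..Suc n}. c \<le> mt H m \<omega>" by (intro bexI[of _ "Suc n"]) auto
      qed (use False in \<open>auto simp: le_Suc_eq\<close>)
      ultimately show ?thesis using Suc False by simp
    qed
  qed
  have step: "c\<^sup>2 * expectation (I m) \<le> expectation (\<lambda>\<omega>. (mt H N \<omega>)\<^sup>2 * I m \<omega>)" if m: "m \<in> {1..N}" for m
  proof -
    have "c\<^sup>2 * expectation (I m) = expectation (\<lambda>\<omega>. c\<^sup>2 * I m \<omega>)" by simp
    also have "\<dots> \<le> expectation (\<lambda>\<omega>. (mt H m \<omega>)\<^sup>2 * I m \<omega>)"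
    proof (rule integral_mono)
      show "integrable M (\<lambda>\<omega>. c\<^sup>2 * I m \<omega>)" by (intro BD_int BD_mult BDI BD_bounded[of _ "c\<^sup>2"]) auto
      show "integrable M (\<lambda>\<omega>. (mt H m \<omega>)\<^sup>2 * I m \<omega>)" unfolding power2_eq_square by (intro BD_int BD_mult BDI BDmt)
      fix \<omega> show "c\<^sup>2 * I m \<omega> \<le> (mt H m \<omega>)\<^sup>2 * I m \<omega>"
        using c by (auto simp: I_def E_def intro!: power_mono)
    qed
    also have "\<dots> \<le> expectation (\<lambda>\<omega>. (mt H N \<omega>)\<^sup>2 * I m \<omega>)"
    proof -
      define R where "R \<omega> = (\<Sum>k=Suc m..N. H k \<omega> * Y k \<omega>)" for \<omega>
      have mN: "mt H N \<omega> = mt H m \<omega> + R \<omega>" for \<omega> unfolding R_def using m by (intro mt_split) auto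
      have PMk: "PM k borel (\<lambda>\<omega>. mt H m \<omega> * I m \<omega> * H k \<omega>)" if "k \<in> {Suc m..N}" for k
      proof -
        have "PM k borel (H k)" using H that unfolding adapted_def by simp
        then show ?thesis using that by (intro PM_mult mt_PM[OF H] PMI) auto
      qed
      have BDk: "BD (\<lambda>\<omega>. mt H m \<omega> * I m \<omega> * H k \<omega>)" if "k \<in> {Suc m..N}" for k
        using that by (intro BD_mult BDmt BDI adapted_BD[OF H]) auto
      have cross: "expectation (\<lambda>\<omega>. mt H m \<omega> * I m \<omega> * R \<omega>) = 0"
      proof -
        have "expectation (\<lambda>\<omega>. mt H m \<omega> * I m \<omega> * R \<omega>) =
            expectation (\<lambda>\<omega>. \<Sum>k=Suc m..N. (mt H m \<omega> * I m \<omega> * H k \<omega>) * Y k \<omega>)"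
          unfolding R_def by (simp add: sum_distrib_left mult.assoc)
        also have "\<dots> = (\<Sum>k=Suc m..N. expectation (\<lambda>\<omega>. (mt H m \<omega> * I m \<omega> * H k \<omega>) * Y k \<omega>))"
          by (subst Bochner_Integration.integral_sum) (auto intro!: BD_int BD_mult BDk BD_Y)
        also have "\<dots> = 0"
          by (intro sum.neutral ballI K(1) PMk BD_int BDk) auto
        finally show ?thesis .
      qed
      have BDR: "BD R" unfolding R_def
        by (rule BD_sum[where F="\<lambda>i \<omega>. H i \<omega> * Y i \<omega>", OF finite_atLeastAtMost])
           (use m in \<open>auto intro!: BD_mult adapted_BD[OF H] BD_Y\<close>)
      have "expectation (\<lambda>\<omega>. (mt H m \<omega>)\<^sup>2 * I m \<omega>) = expectation (\<lambda>\<omega>. (mt H m \<omega>)\<^sup>2 * I m \<omega>) + 2 * expectation (\<lambda>\<omega>. mt H m \<omega> * I m \<omega> * R \<omega>)"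
        by (simp add: cross)
      also have "\<dots> = expectation (\<lambda>\<omega>. (mt H m \<omega>)\<^sup>2 * I m \<omega> + 2 * (mt H m \<omega> * I m \<omega> * R \<omega>))"
        unfolding power2_eq_square
        by (subst Bochner_Integration.integral_add) (auto intro!: BD_int BD_mult BDmt BDI BDR)
      also have "\<dots> \<le> expectation (\<lambda>\<omega>. (mt H N \<omega>)\<^sup>2 * I m \<omega>)"
      proof (rule integral_mono)
        show "integrable M (\<lambda>\<omega>. (mt H m \<omega>)\<^sup>2 * I m \<omega> + 2 * (mt H m \<omega> * I m \<omega> * R \<omega>))"
          unfolding power2_eq_square by (intro BD_int BD_mult BD_add BDmt BDI BDR BD_bounded[of _ 2]) auto
        show "integrable M (\<lambda>\<omega>. (mt H N \<omega>)\<^sup>2 * I m \<omega>)"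
          unfolding power2_eq_square by (intro BD_int BD_mult BDmt BDI)
        fix \<omega>
        have "0 \<le> (R \<omega>)\<^sup>2 * I m \<omega>" by (auto simp: I_def)
        then show "(mt H m \<omega>)\<^sup>2 * I m \<omega> + 2 * (mt H m \<omega> * I m \<omega> * R \<omega>) \<le> (mt H N \<omega>)\<^sup>2 * I m \<omega>"
          unfolding mN by (simp add: power2_eq_square algebra_simps)
      qed
      finally show ?thesis .
    qed
    finally show ?thesis .
  qed
  have "c\<^sup>2 * expectation (\<lambda>\<omega>. if \<exists>m\<in>{1..N}. c \<le> mt H m \<omega> then 1 else 0)
      = c\<^sup>2 * expectation (\<lambda>\<omega>. \<Sum>m=1..N. I m \<omega>)" by (simp only: sumI)
  also have "\<dots> = (\<Sum>m=1..N. c\<^sup>2 * expectation (I m))"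
    by (subst Bochner_Integration.integral_sum) (auto intro!: BD_int BDI simp: sum_distrib_left)
  also have "\<dots> \<le> (\<Sum>m=1..N. expectation (\<lambda>\<omega>. (mt H N \<omega>)\<^sup>2 * I m \<omega>))"
    by (intro sum_mono step)
  also have "\<dots> = expectation (\<lambda>\<omega>. (mt H N \<omega>)\<^sup>2 * (\<Sum>m=1..N. I m \<omega>))"
    unfolding power2_eq_square sum_distrib_left
    by (subst Bochner_Integration.integral_sum) (auto intro!: BD_int BD_mult BDmt BDI)
  also have "\<dots> \<le> expectation (\<lambda>\<omega>. (mt H N \<omega>)\<^sup>2)"
  proof (rule integral_mono)
    show "integrable M (\<lambda>\<omega>. (mt H N \<omega>)\<^sup>2 * (\<Sum>m=1..N. I m \<omega>))"
      unfolding power2_eq_square by (intro BD_int BD_mult BDmt BD_sum BDI) auto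
    show "integrable M (\<lambda>\<omega>. (mt H N \<omega>)\<^sup>2)"
      unfolding power2_eq_square by (intro BD_int BD_mult BDmt)
    fix \<omega> show "(mt H N \<omega>)\<^sup>2 * (\<Sum>m=1..N. I m \<omega>) \<le> (mt H N \<omega>)\<^sup>2"
      unfolding sumI by simp
  qed
  finally show ?thesis .
qed

end



lemma ub_arith:
  fixes s2 r \<kappa> y Mb q d :: real
  assumes s2: "s2 > 0" and r: "r \<ge> 1" and k: "\<kappa> > 0" and sk: "s2 = 4 * \<kappa>\<^sup>2" and y: "y \<ge> 0" and Mb: "Mb \<ge> 0"
    and q: "0 \<le> q" "q \<le> 1" and d: "0 \<le> d"
    and A: "\<kappa> * r * d \<le> y + Mb"
    and B: "s2 * r\<^sup>2 * q \<le> (\<kappa> * r + Mb)\<^sup>2 * d + (y + Mb)\<^sup>2 + (\<kappa> * r + y)\<^sup>2 * q + s2 * r\<^sup>2 * d"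
  shows "q \<le> (2 * ((\<kappa>+Mb)\<^sup>2 * (y+Mb)/\<kappa> + s2*(y+Mb)/\<kappa> + (y+Mb)\<^sup>2 + 2*y\<^sup>2) / s2) / r"
proof -
  define C0 where "C0 = (\<kappa>+Mb)\<^sup>2 * (y+Mb)/\<kappa> + s2*(y+Mb)/\<kappa> + (y+Mb)\<^sup>2 + 2*y\<^sup>2"
  have rd: "r * d \<le> (y + Mb) / \<kappa>" using A k by (simp add: field_simps mult.commute mult.left_commute)
  have h1: "(\<kappa> * r + y)\<^sup>2 \<le> 2 * \<kappa>\<^sup>2 * r\<^sup>2 + 2 * y\<^sup>2"
    using sum_squares_ge_zero[of "\<kappa>*r - y" 0] by (simp add: power2_eq_square algebra_simps)
  have h2: "(\<kappa> * r + y)\<^sup>2 * q \<le> (1/2) * (s2 * r\<^sup>2 * q) + 2 * y\<^sup>2"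
  proof -
    have "(\<kappa> * r + y)\<^sup>2 * q \<le> (2 * \<kappa>\<^sup>2 * r\<^sup>2 + 2 * y\<^sup>2) * q" using h1 q by (intro mult_right_mono) auto
    also have "\<dots> = (1/2) * (s2 * r\<^sup>2 * q) + 2 * y\<^sup>2 * q" by (simp add: sk algebra_simps)
    also have "\<dots> \<le> (1/2) * (s2 * r\<^sup>2 * q) + 2 * y\<^sup>2" using q by (simp add: mult_left_le)
    finally show ?thesis .
  qed
  have h3: "(\<kappa> * r + Mb)\<^sup>2 * d \<le> (\<kappa>+Mb)\<^sup>2 * (y+Mb)/\<kappa> * r"
  proof -
    have "\<kappa> * r + Mb \<le> (\<kappa> + Mb) * r" using r Mb by (simp add: algebra_simps) (metis mult_left_mono mult.commute mult_1_right)
    then have "(\<kappa> * r + Mb)\<^sup>2 \<le> ((\<kappa> + Mb) * r)\<^sup>2" using k r Mb by (intro power_mono) auto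
    then have "(\<kappa> * r + Mb)\<^sup>2 * d \<le> (\<kappa> + Mb)\<^sup>2 * r * (r * d)" using d by (auto simp: power2_eq_square mult_ac intro!: mult_left_mono)
    also have "\<dots> \<le> (\<kappa> + Mb)\<^sup>2 * r * ((y + Mb) / \<kappa>)" using rd r by (intro mult_left_mono) auto
    finally show ?thesis by (simp add: mult_ac)
  qed
  have h4: "s2 * r\<^sup>2 * d \<le> s2 * (y+Mb)/\<kappa> * r"
  proof -
    have "s2 * r\<^sup>2 * d = s2 * r * (r * d)" by (simp add: power2_eq_square mult_ac)
    also have "\<dots> \<le> s2 * r * ((y + Mb) / \<kappa>)" using rd r s2 by (intro mult_left_mono) auto
    finally show ?thesis by (simp add: mult_ac)
  qed
  have h5: "(y+Mb)\<^sup>2 + 2*y\<^sup>2 \<le> ((y+Mb)\<^sup>2 + 2*y\<^sup>2) * r"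
    using r mult_left_mono[of 1 r "(y+Mb)\<^sup>2 + 2*y\<^sup>2"] by simp
  have e: "C0 * r = (\<kappa>+Mb)\<^sup>2 * (y+Mb)/\<kappa> * r + s2*(y+Mb)/\<kappa> * r + ((y+Mb)\<^sup>2 + 2*y\<^sup>2) * r"
    unfolding C0_def by (simp add: algebra_simps)
  have "s2 * r\<^sup>2 * q \<le> 2 * (C0 * r)" using B h2 h3 h4 h5 e by linarith
  then have "q * (s2 * r / 2) * r \<le> C0 * r" by (simp add: power2_eq_square mult_ac)
  then have "q * (s2 * r / 2) \<le> C0" using r by simp
  then have "q \<le> C0 / (s2 * r / 2)" using s2 r by (simp add: field_simps)
  then show ?thesis unfolding C0_def by (simp add: field_simps)
qed

lemma lb_arith:
  fixes s2 r K y Mb q pb pG N :: real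
  assumes s2: "s2 > 0" and r: "r \<ge> 1" and K: "K > 0" and sK: "K\<^sup>2 = 2 * s2" and N: "N = r\<^sup>2"
    and y: "y > 0" and Mb: "Mb \<ge> 0" and pb: "0 \<le> pb"
    and A: "y \<le> (y + K * r + Mb) * pG"
    and B: "(K * r + y)\<^sup>2 * pb \<le> s2 * N * pG"
    and C: "pG - pb \<le> q"
  shows "y / (2 * (y + K + Mb)) / r \<le> q"
proof -
  have Lpos: "K * r > 0" using K r by simp
  have "(K * r)\<^sup>2 \<le> (K * r + y)\<^sup>2" using Lpos y by (intro power_mono) auto
  moreover have "(K * r)\<^sup>2 = 2 * (s2 * N)" using sK N by (simp add: power_mult_distrib)
  ultimately have "2 * (s2 * N) * pb \<le> (K * r + y)\<^sup>2 * pb" using pb by (intro mult_right_mono) auto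
  with B have "2 * (s2 * N) * pb \<le> (s2 * N) * pG" by (simp add: mult_ac)
  moreover have "s2 * N > 0" using s2 N r by simp
  moreover have "2 * (s2 * N) * pb = (s2 * N) * (2 * pb)" by (simp add: algebra_simps)
  ultimately have "(s2 * N) * (2 * pb) \<le> (s2 * N) * pG" by linarith
  then have "2 * pb \<le> pG" using \<open>s2 * N > 0\<close> mult_le_cancel_left_pos by blast
  with C have q2: "pG / 2 \<le> q" by simp
  have pos: "y + K * r + Mb > 0" using y Lpos Mb by simp
  have "y / (y + K * r + Mb) \<le> pG" using A by (subst pos_divide_le_eq[OF pos]) (simp add: mult.commute)
  moreover have "y / ((y + K + Mb) * r) \<le> y / (y + K * r + Mb)"
  proof (rule divide_left_mono)
    show "y + K * r + Mb \<le> (y + K + Mb) * r"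
    proof -
      have "y * 1 \<le> y * r" using r y by (intro mult_left_mono) auto
      moreover have "Mb * 1 \<le> Mb * r" using r Mb by (intro mult_left_mono) auto
      moreover have "(y + K + Mb) * r = y * r + K * r + Mb * r" by (simp add: distrib_right)
      ultimately show ?thesis by linarith
    qed
  qed (use y pos r K Mb in \<open>auto intro!: mult_pos_pos\<close>)
  ultimately have "y / ((y + K + Mb) * r) \<le> pG" by linarith
  then have "y / ((y + K + Mb) * r) / 2 \<le> pG / 2" by (simp add: divide_right_mono)
  then have "y / ((y + K + Mb) * r) / 2 \<le> q" using q2 by linarith
  then show ?thesis by (simp add: field_simps)
qed


context rw
begin

definition W :: "nat \<Rightarrow> 'a \<Rightarrow> real" where "W n \<omega> = (\<Sum>i=1..n. Y i \<omega>)"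
definition inside :: "real \<Rightarrow> real \<Rightarrow> nat \<Rightarrow> 'a \<Rightarrow> bool" where
  "inside L y j \<omega> \<longleftrightarrow> -L < W j \<omega> \<and> W j \<omega> \<le> y"
definition allin :: "real \<Rightarrow> real \<Rightarrow> nat \<Rightarrow> 'a \<Rightarrow> bool" where
  "allin L y n \<omega> \<longleftrightarrow> (\<forall>j\<in>{1..n}. inside L y j \<omega>)"
definition H1 :: "real \<Rightarrow> real \<Rightarrow> nat \<Rightarrow> 'a \<Rightarrow> real" where
  "H1 L y k \<omega> = (if allin L y (k - 1) \<omega> then 1 else 0)"
definition T :: "real \<Rightarrow> real \<Rightarrow> nat \<Rightarrow> 'a \<Rightarrow> real" where
  "T L y = mt (H1 L y)"
definition H2 :: "real \<Rightarrow> real \<Rightarrow> nat \<Rightarrow> 'a \<Rightarrow> real" where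
  "H2 L y k \<omega> = (if \<not> allin L y (k - 1) \<omega> \<and> T L y (k - 1) \<omega> \<le> -L then 1 else 0)"
definition Z :: "real \<Rightarrow> real \<Rightarrow> nat \<Rightarrow> 'a \<Rightarrow> real" where
  "Z L y = mt (H2 L y)"
definition good :: "real \<Rightarrow> nat \<Rightarrow> 'a \<Rightarrow> bool" where
  "good y n \<omega> \<longleftrightarrow> (\<forall>j\<in>{1..n}. W j \<omega> \<le> y)"

lemma W_0[simp]: "W 0 \<omega> = 0" by (simp add: W_def)
lemma W_Suc: "W (Suc n) \<omega> = W n \<omega> + Y (Suc n) \<omega>" by (simp add: W_def)

lemma PM_W: "n < k \<Longrightarrow> PM k borel (W n)"
  unfolding W_def
  by (rule PM_sum[where F="\<lambda>i. Y i", OF finite_atLeastAtMost]) (auto intro: PM_Y)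

lemma PM_allin: "n < k \<Longrightarrow> PM k (count_space UNIV) (allin L y n)"
proof -
  assume nk: "n < k"
  have "PM k (count_space UNIV) (inside L y j)" if "j \<in> {1..n}" for j
    unfolding inside_def using that nk by (intro PM_conj PM_less PM_le PM_const PM_W) auto
  then show ?thesis unfolding allin_def
    by (rule PM_ball[where P="inside L y", OF finite_atLeastAtMost, unfolded allin_def])
qed

lemma adapted_H1: "adapted (H1 L y)"
  unfolding adapted_def
proof (intro conjI allI impI)
  fix k :: nat assume "k \<ge> 1"
  then show "PM k borel (H1 L y k)" unfolding H1_def by (intro PM_ind PM_allin) auto
qed (auto simp: H1_def)

lemma adapted_H2: "adapted (H2 L y)"
  unfolding adapted_def
proof (intro conjI allI impI)
  fix k :: nat assume "k \<ge> 1"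
  then show "PM k borel (H2 L y k)" unfolding H2_def T_def
    by (intro PM_ind PM_conj PM_not PM_allin PM_le mt_PM[OF adapted_H1] PM_const) auto
qed (auto simp: H2_def)

lemma allin_mono: "m \<le> n \<Longrightarrow> allin L y n \<omega> \<Longrightarrow> allin L y m \<omega>"
  unfolding allin_def by auto

lemma exit_exists:
  assumes "\<not> allin L y n \<omega>"
  shows "\<exists>s\<in>{1..n}. allin L y (s - 1) \<omega> \<and> \<not> inside L y s \<omega>"
proof -
  define P where "P j \<longleftrightarrow> j \<in> {1..n} \<and> \<not> inside L y j \<omega>" for j
  have ex: "\<exists>j. P j" using assms unfolding allin_def P_def by auto
  define s where "s = (LEAST j. P j)"
  have Ps: "P s" unfolding s_def by (rule LeastI_ex[OF ex])
  have "allin L y (s - 1) \<omega>"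
    unfolding allin_def
  proof
    fix j assume j: "j \<in> {1..s - 1}"
    then have "j < s" by auto
    then have "\<not> P j" unfolding s_def by (rule not_less_Least)
    then show "inside L y j \<omega>" using j Ps unfolding P_def by auto
  qed
  then show ?thesis using Ps unfolding P_def by blast
qed

lemma T_Suc: "T L y (Suc n) \<omega> = T L y n \<omega> + H1 L y (Suc n) \<omega> * Y (Suc n) \<omega>"
  unfolding T_def by (rule mt_Suc)

lemma Z_Suc: "Z L y (Suc n) \<omega> = Z L y n \<omega> + H2 L y (Suc n) \<omega> * Y (Suc n) \<omega>"
  unfolding Z_def by (rule mt_Suc)

lemma T_allin: "allin L y n \<omega> \<Longrightarrow> T L y n \<omega> = W n \<omega>"
proof (induction n)
  case 0 then show ?case by (simp add: T_def mt_def)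
next
  case (Suc n)
  have "allin L y n \<omega>" using Suc.prems allin_mono[of n "Suc n"] by simp
  with Suc show ?case by (simp add: T_Suc W_Suc H1_def)
qed

lemma T_after:
  assumes s: "1 \<le> s" "allin L y (s - 1) \<omega>" "\<not> inside L y s \<omega>" and sm: "s \<le> m"
  shows "T L y m \<omega> = W s \<omega>"
  using sm
proof (induction m rule: dec_induct)
  case base
  obtain s' where s': "s = Suc s'" using s(1) by (cases s) auto
  show ?case using s(2) by (simp add: s' T_Suc W_Suc H1_def T_allin)
next
  case (step n)
  have "\<not> allin L y n \<omega>" using s(1,3) step(1) unfolding allin_def by auto
  then show ?case using step by (simp add: T_Suc H1_def)
qed

lemma Z_after:
  assumes s: "1 \<le> s" "allin L y (s - 1) \<omega>" "\<not> inside L y s \<omega>" "W s \<omega> \<le> -L" and sm: "s \<le> m"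
  shows "Z L y m \<omega> = W m \<omega> - W s \<omega>"
  using sm
proof (induction m rule: dec_induct)
  case base
  have "H2 L y k \<omega> = 0" if "k \<in> {1..s}" for k
  proof -
    have "allin L y (k - 1) \<omega>" using that s(2) allin_mono[of "k - 1" "s - 1" L y \<omega>] by auto
    then show ?thesis by (simp add: H2_def)
  qed
  then show ?case by (simp add: Z_def mt_def)
next
  case (step n)
  have na: "\<not> allin L y n \<omega>" using s(1,3) step(1) unfolding allin_def by auto
  have "T L y n \<omega> = W s \<omega>" using T_after[OF s(1-3) step(1)] .
  with na s(4) have "H2 L y (Suc n) \<omega> = 1" by (simp add: H2_def)
  then show ?case using step by (simp add: Z_Suc W_Suc)
qed

lemma T_range:
  assumes L: "L > 0" and y: "y \<ge> 0" and bd: "\<forall>k\<ge>1. \<bar>Y k \<omega>\<bar> \<le> Mb"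
  shows "- L - Mb \<le> T L y n \<omega> \<and> T L y n \<omega> \<le> y + Mb"
proof (cases "allin L y n \<omega>")
  case True
  then have "inside L y n \<omega> \<or> n = 0" unfolding allin_def by auto
  then show ?thesis using T_allin[OF True] L y Mb_nonneg by (auto simp: inside_def)
next
  case False
  then obtain s where s: "s \<in> {1..n}" "allin L y (s - 1) \<omega>" "\<not> inside L y s \<omega>"
    using exit_exists by blast
  have Ts: "T L y n \<omega> = W s \<omega>" using T_after[OF _ s(2,3)] s(1) by auto
  obtain s' where s': "s = Suc s'" using s(1) by (cases s) auto
  have Ws': "-L \<le> W s' \<omega> \<and> W s' \<omega> \<le> y"
  proof (cases "s' = 0")
    case True then show ?thesis using L y by simp
  next
    case False
    then have "inside L y s' \<omega>" using s(2) unfolding allin_def s' by auto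
    then show ?thesis unfolding inside_def by auto
  qed
  have "\<bar>Y s \<omega>\<bar> \<le> Mb" using bd s(1) by auto
  then have Yb: "- Mb \<le> Y s \<omega>" "Y s \<omega> \<le> Mb" by (simp_all add: abs_le_iff)
  have Wsx: "W s \<omega> = W s' \<omega> + Y s \<omega>" by (simp add: s' W_Suc)
  show ?thesis unfolding Ts Wsx using Ws' Yb by linarith
qed

lemma T_exit:
  assumes "\<not> allin L y n \<omega>"
  shows "T L y n \<omega> \<le> -L \<or> T L y n \<omega> > y"
proof -
  obtain s where s: "s \<in> {1..n}" "allin L y (s - 1) \<omega>" "\<not> inside L y s \<omega>"
    using exit_exists[OF assms] by blast
  have Ts: "T L y n \<omega> = W s \<omega>" using T_after[OF _ s(2,3)] s(1) by auto
  then show ?thesis using s(3) unfolding inside_def by auto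
qed

lemma PM_good: "n < k \<Longrightarrow> PM k (count_space UNIV) (good y n)"
proof -
  assume nk: "n < k"
  have "PM k (count_space UNIV) (\<lambda>\<omega>. W j \<omega> \<le> y)" if "j \<in> {1..n}" for j
    using that nk by (intro PM_le PM_const PM_W) auto
  then show ?thesis unfolding good_def
    by (rule PM_ball[where P="\<lambda>j \<omega>. W j \<omega> \<le> y", OF finite_atLeastAtMost, unfolded good_def])
qed

lemma BD_ind_good: "BD (\<lambda>\<omega>. if good y n \<omega> then 1 else 0)"
  by (rule BD_bounded[of _ 1]) (auto intro!: PM_meas[OF PM_ind[OF PM_good[of n "Suc n"]]])

lemma BD_T: "BD (T L y n)" unfolding T_def by (rule mt_BD[OF adapted_H1])

lemma BD_ind_le: "BD f \<Longrightarrow> BD (\<lambda>\<omega>. if f \<omega> \<le> c then 1 else 0)"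
  by (rule BD_bounded[of _ 1]) (auto dest: BD_meas)

lemma BD_H1: "BD (H1 L y k)"
proof -
  have e: "H1 L y k = (\<lambda>\<omega>. if allin L y (k - 1) \<omega> then 1 else 0)" by (simp add: H1_def fun_eq_iff)
  show ?thesis unfolding e
    by (rule BD_bounded[of _ 1], rule PM_meas, rule PM_ind, rule PM_allin[of "k - 1" "Suc k"]) auto
qed

lemma BD_H2: "k \<ge> 1 \<Longrightarrow> BD (H2 L y k)"
  by (rule adapted_BD[OF adapted_H2])

lemma sq_split:
  fixes t :: real
  assumes "- L - Mb \<le> t" "t \<le> y + Mb" "L > 0" "y \<ge> 0" "Mb \<ge> 0"
    and "\<not> t \<le> -L \<Longrightarrow> \<not> t > y \<Longrightarrow> g"
  shows "t\<^sup>2 \<le> (L + Mb)\<^sup>2 * (if t \<le> -L then 1 else 0) + (y + Mb)\<^sup>2 + (L + y)\<^sup>2 * (if g then 1 else 0)"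
proof -
  have nn: "0 \<le> (L + Mb)\<^sup>2 * (if t \<le> -L then 1 else 0)" "0 \<le> (L + y)\<^sup>2 * (if g then 1 else 0)" "0 \<le> (y+Mb)\<^sup>2"
    by auto
  show ?thesis
  proof (cases "t \<le> -L")
    case True
    have "\<bar>t\<bar> \<le> L + Mb" using True assms by auto
    then have "t\<^sup>2 \<le> (L + Mb)\<^sup>2" by (metis abs_ge_zero abs_le_square_iff abs_of_nonneg order_trans)
    moreover have "(L + Mb)\<^sup>2 * (if t \<le> -L then 1 else 0) = (L + Mb)\<^sup>2" using True by simp
    ultimately show ?thesis using nn by linarith
  next
    case False
    show ?thesis
    proof (cases "t > y")
      case True
      have "\<bar>t\<bar> \<le> y + Mb" using True assms by auto
      then have "t\<^sup>2 \<le> (y + Mb)\<^sup>2" by (metis abs_ge_zero abs_le_square_iff abs_of_nonneg order_trans)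
      then show ?thesis using nn by linarith
    next
      case False2: False
      have g: g using assms(6) False False2 by auto
      have "\<bar>t\<bar> \<le> L + y" using False False2 assms by auto
      then have "t\<^sup>2 \<le> (L + y)\<^sup>2" by (metis abs_ge_zero abs_le_square_iff abs_of_nonneg order_trans)
      moreover have "(L + y)\<^sup>2 * (if g then 1 else 0) = (L + y)\<^sup>2" using g by simp
      ultimately show ?thesis using nn by linarith
    qed
  qed
qed

lemma UB_core:
  fixes N :: nat
  assumes L: "L > 0" and y: "y \<ge> 0"
  defines "q \<equiv> expectation (\<lambda>\<omega>. if good y N \<omega> then 1 else 0)"
    and "d \<equiv> expectation (\<lambda>\<omega>. if T L y N \<omega> \<le> -L then 1 else 0)"
  shows "L * d \<le> y + Mb"
    and "s2 * N * q \<le> (L + Mb)\<^sup>2 * d + (y + Mb)\<^sup>2 + (L + y)\<^sup>2 * q + s2 * N * d"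
    and "0 \<le> q" "q \<le> 1" "0 \<le> d"
proof -
  have iq: "integrable M (\<lambda>\<omega>. if good y N \<omega> then 1 else 0 :: real)" by (rule BD_int[OF BD_ind_good])
  have iT: "integrable M (T L y N)" by (rule BD_int[OF BD_T])
  have id: "integrable M (\<lambda>\<omega>. if T L y N \<omega> \<le> -L then 1 else 0 :: real)" by (rule BD_int[OF BD_ind_le[OF BD_T]])
  have iT2: "integrable M (\<lambda>\<omega>. (T L y N \<omega>)\<^sup>2)" unfolding power2_eq_square by (intro BD_int BD_mult BD_T)
  have iH: "integrable M (H1 L y k)" for k by (rule BD_int[OF BD_H1])
  have ET: "expectation (T L y N) = 0" unfolding T_def by (rule mt_mean[OF adapted_H1])
  have AEr: "AE \<omega> in M. - L - Mb \<le> T L y N \<omega> \<and> T L y N \<omega> \<le> y + Mb"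
    using bddAE by eventually_elim (intro T_range L y, auto)
  show "0 \<le> q" unfolding q_def by (intro integral_nonneg_AE) auto
  show "q \<le> 1"
  proof -
    have "q \<le> expectation (\<lambda>\<omega>. 1::real)" unfolding q_def by (intro integral_mono iq) auto
    then show ?thesis by (simp add: prob_space)
  qed
  show d0: "0 \<le> d" unfolding d_def by (intro integral_nonneg_AE) auto
  show "L * d \<le> y + Mb"
  proof -
    have "L * d = expectation (\<lambda>\<omega>. L * (if T L y N \<omega> \<le> -L then 1 else 0))" unfolding d_def by simp
    also have "\<dots> \<le> expectation (\<lambda>\<omega>. (y + Mb) - T L y N \<omega>)"
    proof (rule integral_mono_AE)
      show "integrable M (\<lambda>\<omega>. L * (if T L y N \<omega> \<le> -L then 1 else 0))" using id by simp
      show "integrable M (\<lambda>\<omega>. (y + Mb) - T L y N \<omega>)" using iT by simp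
      show "AE \<omega> in M. L * (if T L y N \<omega> \<le> -L then 1 else 0) \<le> (y + Mb) - T L y N \<omega>"
        using AEr by eventually_elim (use y Mb_nonneg in auto)
    qed
    also have "\<dots> = y + Mb" using iT ET by (simp add: Bochner_Integration.integral_diff prob_space)
    finally show ?thesis .
  qed
  have U: "real N * (if good y N \<omega> then 1 else 0) \<le> (\<Sum>k=1..N. H1 L y k \<omega>) + real N * (if T L y N \<omega> \<le> -L then 1 else 0)" for \<omega>
  proof -
    have U1: "(if good y N \<omega> then 1 else 0) \<le> H1 L y k \<omega> + (if T L y N \<omega> \<le> -L then 1 else 0)" if k: "k \<in> {1..N}" for k
    proof (cases "good y N \<omega>")
      case True
      show ?thesis
      proof (cases "allin L y (k - 1) \<omega>")
        case True then show ?thesis by (simp add: H1_def)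
      next
        case False
        then obtain s where s: "s \<in> {1..k - 1}" "allin L y (s - 1) \<omega>" "\<not> inside L y s \<omega>"
          using exit_exists by blast
        have "W s \<omega> \<le> y" using \<open>good y N \<omega>\<close> s(1) k unfolding good_def by auto
        then have "W s \<omega> \<le> -L" using s(3) unfolding inside_def by auto
        moreover have "T L y N \<omega> = W s \<omega>" using T_after[OF _ s(2,3)] s(1) k by auto
        ultimately show ?thesis by (simp add: H1_def)
      qed
    qed (simp add: H1_def)
    have "real N * (if good y N \<omega> then 1 else 0) = (\<Sum>k=1..N. (if good y N \<omega> then 1 else 0))" by simp
    also have "\<dots> \<le> (\<Sum>k=1..N. H1 L y k \<omega> + (if T L y N \<omega> \<le> -L then 1 else 0))"
      by (intro sum_mono U1)
    also have "\<dots> = (\<Sum>k=1..N. H1 L y k \<omega>) + real N * (if T L y N \<omega> \<le> -L then 1 else 0)"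
      by (simp add: sum.distrib)
    finally show ?thesis .
  qed
  have "N * q \<le> (\<Sum>k=1..N. expectation (H1 L y k)) + N * d"
  proof -
    have "N * q = expectation (\<lambda>\<omega>. real N * (if good y N \<omega> then 1 else 0))" unfolding q_def by simp
    also have "\<dots> \<le> expectation (\<lambda>\<omega>. (\<Sum>k=1..N. H1 L y k \<omega>) + real N * (if T L y N \<omega> \<le> -L then 1 else 0))"
      by (rule integral_mono) (use iq id iH U in auto)
    also have "\<dots> = (\<Sum>k=1..N. expectation (H1 L y k)) + N * d"
      unfolding d_def using iH id
      by (simp add: Bochner_Integration.integral_add Bochner_Integration.integral_sum)
    finally show ?thesis .
  qed
  moreover have "expectation (\<lambda>\<omega>. (T L y N \<omega>)\<^sup>2) = s2 * (\<Sum>k=1..N. expectation (H1 L y k))"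
  proof -
    have "(\<lambda>\<omega>. (H1 L y k \<omega>)\<^sup>2) = H1 L y k" for k by (auto simp: H1_def fun_eq_iff)
    then show ?thesis unfolding T_def using mt_sq[OF adapted_H1] by simp
  qed
  moreover have "expectation (\<lambda>\<omega>. (T L y N \<omega>)\<^sup>2) \<le> (L + Mb)\<^sup>2 * d + (y + Mb)\<^sup>2 + (L + y)\<^sup>2 * q"
  proof -
    have "expectation (\<lambda>\<omega>. (T L y N \<omega>)\<^sup>2) \<le> expectation (\<lambda>\<omega>. (L + Mb)\<^sup>2 * (if T L y N \<omega> \<le> -L then 1 else 0)
        + (y + Mb)\<^sup>2 + (L + y)\<^sup>2 * (if good y N \<omega> then 1 else 0))"
    proof (rule integral_mono_AE)
      show "integrable M (\<lambda>\<omega>. (T L y N \<omega>)\<^sup>2)" by (rule iT2)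
      show "integrable M (\<lambda>\<omega>. (L + Mb)\<^sup>2 * (if T L y N \<omega> \<le> -L then 1 else 0)
        + (y + Mb)\<^sup>2 + (L + y)\<^sup>2 * (if good y N \<omega> then 1 else 0))" using id iq by simp
      show "AE \<omega> in M. (T L y N \<omega>)\<^sup>2 \<le> (L + Mb)\<^sup>2 * (if T L y N \<omega> \<le> -L then 1 else 0)
        + (y + Mb)\<^sup>2 + (L + y)\<^sup>2 * (if good y N \<omega> then 1 else 0)"
        using AEr
      proof eventually_elim
        case (elim \<omega>)
        have "good y N \<omega>" if "\<not> T L y N \<omega> \<le> -L" "\<not> T L y N \<omega> > y"
        proof -
          have "allin L y N \<omega>" using T_exit[of L y N \<omega>] that by auto
          then show ?thesis unfolding allin_def good_def inside_def by auto
        qed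
        then show ?case using sq_split[of L "T L y N \<omega>" y "good y N \<omega>"] elim L y Mb_nonneg by auto
      qed
    qed
    also have "\<dots> = (L + Mb)\<^sup>2 * d + (y + Mb)\<^sup>2 + (L + y)\<^sup>2 * q"
      unfolding d_def q_def using id iq by (simp add: Bochner_Integration.integral_add prob_space)
    finally show ?thesis .
  qed
  ultimately show "s2 * N * q \<le> (L + Mb)\<^sup>2 * d + (y + Mb)\<^sup>2 + (L + y)\<^sup>2 * q + s2 * N * d"
    using s2_pos by (smt (verit, ccfv_SIG) mult.assoc mult_left_mono distrib_left)
qed

lemma LB_core:
  fixes N :: nat
  assumes L: "L > 0" and y: "y \<ge> 0"
  defines "pG \<equiv> expectation (\<lambda>\<omega>. if T L y N \<omega> \<le> y then 1 else 0)"
    and "pb \<equiv> expectation (\<lambda>\<omega>. if \<exists>m\<in>{1..N}. L + y \<le> Z L y m \<omega> then 1 else 0)"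
    and "q \<equiv> expectation (\<lambda>\<omega>. if good y N \<omega> then 1 else 0)"
  shows "y \<le> (y + L + Mb) * pG" and "(L + y)\<^sup>2 * pb \<le> s2 * N * pG" and "pG - pb \<le> q" and "0 \<le> pb"
proof -
  have iq: "integrable M (\<lambda>\<omega>. if good y N \<omega> then 1 else 0 :: real)" by (rule BD_int[OF BD_ind_good])
  have iT: "integrable M (T L y N)" by (rule BD_int[OF BD_T])
  have iG: "integrable M (\<lambda>\<omega>. if T L y N \<omega> \<le> y then 1 else 0 :: real)" by (rule BD_int[OF BD_ind_le[OF BD_T]])
  have PMb: "PM (Suc N) (count_space UNIV) (\<lambda>\<omega>. \<exists>m\<in>{1..N}. L + y \<le> Z L y m \<omega>)"
  proof -
    have "PM (Suc N) (count_space UNIV) (\<lambda>\<omega>. L + y \<le> Z L y m \<omega>)" if "m \<in> {1..N}" for m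
      using that unfolding Z_def by (intro PM_le PM_const mt_PM[OF adapted_H2]) auto
    then have "PM (Suc N) (count_space UNIV) (\<lambda>\<omega>. \<not> (\<forall>m\<in>{1..N}. \<not> L + y \<le> Z L y m \<omega>))"
      by (intro PM_not PM_ball) auto
    then show ?thesis by simp
  qed
  have ib: "integrable M (\<lambda>\<omega>. if \<exists>m\<in>{1..N}. L + y \<le> Z L y m \<omega> then 1 else 0 :: real)"
    by (rule BD_int, rule BD_bounded[of _ 1], rule PM_meas, rule PM_ind, rule PMb) auto
  have ET: "expectation (T L y N) = 0" unfolding T_def by (rule mt_mean[OF adapted_H1])
  have AEr: "AE \<omega> in M. - L - Mb \<le> T L y N \<omega> \<and> T L y N \<omega> \<le> y + Mb"
    using bddAE by eventually_elim (intro T_range L y, auto)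
  show "0 \<le> pb" unfolding pb_def by (intro integral_nonneg_AE) auto
  show "y \<le> (y + L + Mb) * pG"
  proof -
    have "expectation (\<lambda>\<omega>. y - (y + L + Mb) * (if T L y N \<omega> \<le> y then 1 else 0)) \<le> expectation (T L y N)"
    proof (rule integral_mono_AE)
      show "integrable M (\<lambda>\<omega>. y - (y + L + Mb) * (if T L y N \<omega> \<le> y then 1 else 0))" using iG by simp
      show "integrable M (T L y N)" by (rule iT)
      show "AE \<omega> in M. y - (y + L + Mb) * (if T L y N \<omega> \<le> y then 1 else 0) \<le> T L y N \<omega>"
        using AEr by eventually_elim auto
    qed
    then have "y - (y + L + Mb) * pG \<le> 0" unfolding pG_def using iG ET
      by (simp add: Bochner_Integration.integral_diff prob_space)
    then show ?thesis by simp
  qed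
  have H2G: "(H2 L y k \<omega>)\<^sup>2 \<le> (if T L y N \<omega> \<le> y then 1 else 0)" if k: "k \<in> {1..N}" for k \<omega>
  proof (cases "\<not> allin L y (k - 1) \<omega> \<and> T L y (k - 1) \<omega> \<le> -L")
    case True
    then obtain s where s: "s \<in> {1..k - 1}" "allin L y (s - 1) \<omega>" "\<not> inside L y s \<omega>"
      using exit_exists by blast
    have "T L y (k - 1) \<omega> = W s \<omega>" using T_after[OF _ s(2,3)] s(1) by auto
    moreover have "T L y N \<omega> = W s \<omega>" using T_after[OF _ s(2,3)] s(1) k by auto
    ultimately have "T L y N \<omega> \<le> y" using True L y by auto
    then show ?thesis by (simp add: H2_def)
  qed (auto simp: H2_def)
  show "(L + y)\<^sup>2 * pb \<le> s2 * N * pG"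
  proof -
    have "(L + y)\<^sup>2 * pb \<le> expectation (\<lambda>\<omega>. (Z L y N \<omega>)\<^sup>2)"
      unfolding pb_def Z_def using L y by (intro kolm adapted_H2) auto
    also have "\<dots> = s2 * (\<Sum>k=1..N. expectation (\<lambda>\<omega>. (H2 L y k \<omega>)\<^sup>2))"
      unfolding Z_def by (rule mt_sq[OF adapted_H2])
    also have "\<dots> \<le> s2 * (\<Sum>k=1..N. pG)"
    proof (intro mult_left_mono sum_mono)
      fix k assume k: "k \<in> {1..N}"
      show "expectation (\<lambda>\<omega>. (H2 L y k \<omega>)\<^sup>2) \<le> pG"
        unfolding pG_def
      proof (rule integral_mono)
        show "integrable M (\<lambda>\<omega>. (H2 L y k \<omega>)\<^sup>2)" unfolding power2_eq_square
          using k by (intro BD_int BD_mult BD_H2) auto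
      qed (use iG H2G k in auto)
    qed (use s2_pos in auto)
    finally show ?thesis by (simp add: mult.assoc)
  qed
  have pt: "(if T L y N \<omega> \<le> y then 1 else 0) - (if \<exists>m\<in>{1..N}. L + y \<le> Z L y m \<omega> then 1 else 0)
      \<le> (if good y N \<omega> then 1 else (0::real))" for \<omega>
  proof (cases "T L y N \<omega> \<le> y \<and> \<not> (\<exists>m\<in>{1..N}. L + y \<le> Z L y m \<omega>)")
    case True
    have "good y N \<omega>"
    proof (cases "allin L y N \<omega>")
      case True then show ?thesis unfolding allin_def good_def inside_def by auto
    next
      case False
      then obtain s where s: "s \<in> {1..N}" "allin L y (s - 1) \<omega>" "\<not> inside L y s \<omega>"
        using exit_exists by blast
      have Ts: "T L y N \<omega> = W s \<omega>" using T_after[OF _ s(2,3)] s(1) by auto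
      then have Ws: "W s \<omega> \<le> -L" using True s(3) unfolding inside_def by auto
      show ?thesis unfolding good_def
      proof
        fix j assume j: "j \<in> {1..N}"
        show "W j \<omega> \<le> y"
        proof (cases "j < s")
          case True
          then have "inside L y j \<omega>" using s(2) j unfolding allin_def by auto
          then show ?thesis unfolding inside_def by auto
        next
          case False
          then have "Z L y j \<omega> = W j \<omega> - W s \<omega>" using Z_after[OF _ s(2,3) Ws] s(1) by auto
          moreover have "\<not> L + y \<le> Z L y j \<omega>" using True j by blast
          then have "Z L y j \<omega> < L + y" by simp
          ultimately show ?thesis using Ws by auto
        qed
      qed
    qed
    then show ?thesis by simp
  qed auto
  show "pG - pb \<le> q"
  proof -
    have "pG - pb = expectation (\<lambda>\<omega>. (if T L y N \<omega> \<le> y then 1 else 0) - (if \<exists>m\<in>{1..N}. L + y \<le> Z L y m \<omega> then 1 else 0))"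
      unfolding pG_def pb_def using iG ib by (simp add: Bochner_Integration.integral_diff)
    also have "\<dots> \<le> q" unfolding q_def
      by (rule integral_mono) (use iG ib iq pt in auto)
    finally show ?thesis .
  qed
qed

lemma UB:
  assumes y: "y \<ge> 0"
  shows "\<exists>C. \<forall>N\<ge>1. expectation (\<lambda>\<omega>. if good y N \<omega> then 1 else 0) \<le> C / sqrt (real N)"
proof -
  define \<kappa> where "\<kappa> = sqrt s2 / 2"
  have k: "\<kappa> > 0" using s2_pos by (simp add: \<kappa>_def)
  have sk: "s2 = 4 * \<kappa>\<^sup>2" using s2_pos by (simp add: \<kappa>_def power_divide)
  define C where "C = 2 * ((\<kappa>+Mb)\<^sup>2 * (y+Mb)/\<kappa> + s2*(y+Mb)/\<kappa> + (y+Mb)\<^sup>2 + 2*y\<^sup>2) / s2"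
  have "expectation (\<lambda>\<omega>. if good y N \<omega> then 1 else 0) \<le> C / sqrt (real N)" if N: "N \<ge> 1" for N :: nat
  proof -
    define r where "r = sqrt (real N)"
    have r: "r \<ge> 1" using N by (simp add: r_def)
    have rN: "real N = r\<^sup>2" by (simp add: r_def)
    have L: "\<kappa> * r > 0" using k r by simp
    note U = UB_core[OF L y, of N]
    show ?thesis unfolding C_def r_def[symmetric]
      by (rule ub_arith[OF s2_pos r k sk y Mb_nonneg U(3,4,5,1)]) (use U(2) in \<open>simp add: rN\<close>)
  qed
  then show ?thesis by blast
qed

lemma LB:
  assumes y: "y > 0"
  shows "\<exists>c>0. \<forall>N\<ge>1. c / sqrt (real N) \<le> expectation (\<lambda>\<omega>. if good y N \<omega> then 1 else 0)"
proof -
  define K where "K = sqrt (2 * s2)"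
  have K: "K > 0" using s2_pos by (simp add: K_def)
  have sK: "K\<^sup>2 = 2 * s2" using s2_pos by (simp add: K_def)
  define c where "c = y / (2 * (y + K + Mb))"
  have c: "c > 0" using y K Mb_nonneg by (simp add: c_def)
  have "c / sqrt (real N) \<le> expectation (\<lambda>\<omega>. if good y N \<omega> then 1 else 0)" if N: "N \<ge> 1" for N :: nat
  proof -
    define r where "r = sqrt (real N)"
    have r: "r \<ge> 1" using N by (simp add: r_def)
    have rN: "real N = r\<^sup>2" by (simp add: r_def)
    have L: "K * r > 0" using K r by simp
    note U = LB_core[OF L less_imp_le[OF y], of N]
    show ?thesis unfolding c_def r_def[symmetric]
      by (rule lb_arith[OF s2_pos r K sK rN y Mb_nonneg U(4,1,2,3)])
  qed
  with c show ?thesis by blast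
qed

end



context rw
begin

lemma good_sets: "{\<omega>\<in>space M. good y N \<omega>} \<in> sets M"
  by (rule predE, rule PM_meas, rule PM_good[of N "Suc N"]) simp

lemma q_measure: "expectation (\<lambda>\<omega>. if good y N \<omega> then 1 else 0) = measure M {\<omega>\<in>space M. good y N \<omega>}"
proof -
  have "expectation (\<lambda>\<omega>. if good y N \<omega> then 1 else 0) = expectation (indicator {\<omega>\<in>space M. good y N \<omega>})"
    by (intro Bochner_Integration.integral_cong) (auto simp: indicator_def)
  also have "\<dots> = measure M {\<omega>\<in>space M. good y N \<omega>}"
    by (simp add: Int_absorb2 subsetI)
  finally show ?thesis .
qed

end

lemma X_meas:
  assumes "prob_space M" and meas: "\<And>n. Y n \<in> borel_measurable M" and AR: "is_AR_process p a Y X"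
  shows "X n \<in> borel_measurable M"
proof (induction n rule: less_induct)
  case (less n)
  show ?case
  proof (cases "n = 0")
    case True
    then have "X n = (\<lambda>_. 0)" using AR by (auto simp: is_AR_process_def fun_eq_iff)
    then show ?thesis by simp
  next
    case False
    then have "X n = (\<lambda>\<omega>. (\<Sum>k=1..p. a k * (if k < n then X (n - k) \<omega> else 0)) + Y n \<omega>)"
      using AR by (auto simp: is_AR_process_def fun_eq_iff)
    moreover have "(\<lambda>\<omega>. (\<Sum>k=1..p. a k * (if k < n then X (n - k) \<omega> else 0)) + Y n \<omega>) \<in> borel_measurable M"
    proof (intro borel_measurable_add borel_measurable_sum borel_measurable_times measurable_const meas)
      fix k assume k: "k \<in> {1..p}"
      show "(\<lambda>\<omega>. if k < n then X (n - k) \<omega> else 0) \<in> borel_measurable M"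
      proof (cases "k < n")
        case True
        then have "n - k < n" using k by auto
        then show ?thesis using less True by simp
      qed simp
    qed auto
    ultimately show ?thesis by simp
  qed
qed

theorem mainTheorem19:
  fixes M :: "'a measure" and Y X :: "nat \<Rightarrow> 'a \<Rightarrow> real"
    and p :: nat and a :: "nat \<Rightarrow> real" and Mb :: real
  assumes "prob_space M"
    and meas: "\<And>n. Y n \<in> borel_measurable M"
    and indep: "prob_space.indep_vars M (\<lambda>_. borel) Y {1..}"
    and ident: "\<And>n. n \<ge> 1 \<Longrightarrow> distr M borel (Y n) = distr M borel (Y 1)"
    and nondeg: "\<not> (\<exists>c. AE \<omega> in M. Y 1 \<omega> = c)"
    and mean0: "prob_space.expectation M (Y 1) = 0"
    and bdd: "AE \<omega> in M. \<bar>Y 1 \<omega>\<bar> \<le> Mb"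
    and AR: "is_AR_process p a Y X"
    and roots: "\<And>z. char_poly_AR p a z = 0 \<Longrightarrow> cmod z < 1"
  shows "\<exists>x0\<ge>0. \<forall>x\<ge>x0.
           (\<lambda>N. measure M {\<omega> \<in> space M. (MAX n\<in>{1..N}. \<Sum>k=1..n. X k \<omega>) \<le> x})
             \<in> \<Theta>(\<lambda>N. 1 / sqrt (real N))"
proof -
  interpret rw M Y Mb
    by (rule rw.intro[OF assms(1) rw_axioms.intro[OF meas indep ident nondeg mean0 bdd]])
  obtain D where D0: "D \<ge> 0" and D: "\<And>(x::nat\<Rightarrow>real) u B. x 0 = 0 \<Longrightarrow>
     (\<forall>n\<ge>1. x n = (\<Sum>k=1..p. a k * (if k < n then x (n-k) else 0)) + u n) \<Longrightarrow>
     (\<forall>n\<ge>1. \<bar>u n\<bar> \<le> B) \<Longrightarrow>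
     (\<forall>n. \<bar>(1 - (\<Sum>k=1..p. a k)) * (\<Sum>k=1..n. x k) - (\<Sum>k=1..n. u k)\<bar> \<le> D * B)"
    using AR_decomp[OF roots] by blast
  define c where "c = 1 - (\<Sum>k=1..p. a k)"
  have c: "c > 0" unfolding c_def by (rule c_pos[OF roots])
  define S where "S n \<omega> = (\<Sum>k=1..n. X k \<omega>)" for n \<omega>
  define E where "E = D * Mb"
  have E0: "E \<ge> 0" using D0 Mb_nonneg by (simp add: E_def)
  have AEc: "AE \<omega> in M. \<forall>n. \<bar>c * S n \<omega> - W n \<omega>\<bar> \<le> E"
    using bddAE
  proof eventually_elim
    case (elim \<omega>)
    have x0: "X 0 \<omega> = 0" using AR by (simp add: is_AR_process_def)
    have rec: "\<forall>n\<ge>1. X n \<omega> = (\<Sum>k=1..p. a k * (if k < n then X (n-k) \<omega> else 0)) + Y n \<omega>"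
      using AR by (simp add: is_AR_process_def)
    show ?case using D[of "\<lambda>n. X n \<omega>" "\<lambda>n. Y n \<omega>" Mb, OF x0 rec] elim
      by (simp add: c_def S_def W_def E_def)
  qed
  have Xm: "X n \<in> borel_measurable M" for n by (rule X_meas[OF assms(1) meas AR])
  have Sm: "S n \<in> borel_measurable M" for n unfolding S_def using Xm by measurable
  define x0 where "x0 = (E + 1) / c"
  have x00: "x0 \<ge> 0" using E0 c by (simp add: x0_def)
  show ?thesis
  proof (intro exI[of _ x0] conjI x00 allI impI)
    fix x assume x: "x \<ge> x0"
    define y1 where "y1 = c * x - E"
    define y2 where "y2 = c * x + E"
    have y1: "y1 > 0"
    proof -
      have "c * x \<ge> c * x0" using x c by simp
      also have "c * x0 = E + 1" using c by (simp add: x0_def)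
      finally show ?thesis by (simp add: y1_def)
    qed
    have y2: "y2 \<ge> 0" using y1 E0 by (simp add: y1_def y2_def)
    obtain C where C: "\<And>N. N \<ge> 1 \<Longrightarrow> expectation (\<lambda>\<omega>. if good y2 N \<omega> then 1 else 0) \<le> C / sqrt (real N)"
      using UB[OF y2] by blast
    obtain c1 where c1: "c1 > 0" "\<And>N. N \<ge> 1 \<Longrightarrow> c1 / sqrt (real N) \<le> expectation (\<lambda>\<omega>. if good y1 N \<omega> then 1 else 0)"
      using LB[OF y1] by blast
    define f where "f N = measure M {\<omega> \<in> space M. (MAX n\<in>{1..N}. \<Sum>k=1..n. X k \<omega>) \<le> x}" for N
    have fset: "{\<omega> \<in> space M. (MAX n\<in>{1..N}. \<Sum>k=1..n. X k \<omega>) \<le> x} = {\<omega> \<in> space M. \<forall>n\<in>{1..N}. S n \<omega> \<le> x}"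
      if N: "N \<ge> 1" for N
      using N by (auto simp: S_def)
    have bounds: "c1 / sqrt (real N) \<le> f N \<and> f N \<le> C / sqrt (real N)" if N: "N \<ge> 1" for N
    proof -
      have fN: "f N = measure M {\<omega> \<in> space M. \<forall>n\<in>{1..N}. S n \<omega> \<le> x}" unfolding f_def fset[OF N] ..
      have sA: "{\<omega> \<in> space M. \<forall>n\<in>{1..N}. S n \<omega> \<le> x} \<in> sets M" using Sm by measurable
      have "measure M {\<omega>\<in>space M. good y1 N \<omega>} \<le> f N"
        unfolding fN
      proof (rule finite_measure_mono_AE[OF _ sA])
        show "AE \<omega> in M. \<omega> \<in> {\<omega> \<in> space M. good y1 N \<omega>} \<longrightarrow> \<omega> \<in> {\<omega> \<in> space M. \<forall>n\<in>{1..N}. S n \<omega> \<le> x}"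
          using AEc
        proof eventually_elim
          case (elim \<omega>)
          show ?case
          proof (intro impI)
            assume "\<omega> \<in> {\<omega> \<in> space M. good y1 N \<omega>}"
            then have g: "\<omega> \<in> space M" "good y1 N \<omega>" by auto
            have "\<forall>n\<in>{1..N}. S n \<omega> \<le> x"
            proof
              fix n assume n: "n \<in> {1..N}"
              have "W n \<omega> \<le> y1" using g n unfolding good_def by auto
              moreover have "c * S n \<omega> \<le> W n \<omega> + E" using elim[rule_format, of n] by linarith
              ultimately have "c * S n \<omega> \<le> c * x" by (simp add: y1_def)
              then show "S n \<omega> \<le> x" using c by simp
            qed
            then show "\<omega> \<in> {\<omega> \<in> space M. \<forall>n\<in>{1..N}. S n \<omega> \<le> x}" using g by simp
          qed
        qed
      qed
      moreover have "f N \<le> measure M {\<omega>\<in>space M. good y2 N \<omega>}"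
        unfolding fN
      proof (rule finite_measure_mono_AE[OF _ good_sets])
        show "AE \<omega> in M. \<omega> \<in> {\<omega> \<in> space M. \<forall>n\<in>{1..N}. S n \<omega> \<le> x} \<longrightarrow> \<omega> \<in> {\<omega> \<in> space M. good y2 N \<omega>}"
          using AEc
        proof eventually_elim
          case (elim \<omega>)
          show ?case
          proof (intro impI)
            assume "\<omega> \<in> {\<omega> \<in> space M. \<forall>n\<in>{1..N}. S n \<omega> \<le> x}"
            then have g: "\<omega> \<in> space M" "\<forall>n\<in>{1..N}. S n \<omega> \<le> x" by auto
            have "good y2 N \<omega>" unfolding good_def
            proof
              fix n assume n: "n \<in> {1..N}"
              have "S n \<omega> \<le> x" using g n by auto
              then have "c * S n \<omega> \<le> c * x" using c by simp
              moreover have "W n \<omega> \<le> c * S n \<omega> + E" using elim[rule_format, of n] by linarith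
              ultimately show "W n \<omega> \<le> y2" by (simp add: y2_def)
            qed
            then show "\<omega> \<in> {\<omega> \<in> space M. good y2 N \<omega>}" using g by simp
          qed
        qed
      qed
      ultimately show ?thesis using C[OF N] c1(2)[OF N] by (simp add: q_measure)
    qed
    have "(\<lambda>N. f N) \<in> \<Theta>(\<lambda>N. 1 / sqrt (real N))"
    proof (rule bigthetaI'[of c1 "max C 1"])
      show "c1 > 0" by (rule c1(1))
      show "max C 1 > 0" by simp
      show "\<forall>\<^sub>F N in at_top. c1 * norm (1 / sqrt (real N)) \<le> norm (f N) \<and> norm (f N) \<le> max C 1 * norm (1 / sqrt (real N))"
        unfolding eventually_at_top_linorder
      proof (intro exI[of _ 1] allI impI)
        fix N :: nat assume N: "N \<ge> 1"
        have b: "c1 / sqrt (real N) \<le> f N" "f N \<le> C / sqrt (real N)" using bounds[OF N] by auto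
        have pos: "c1 / sqrt (real N) > 0" using c1(1) N by simp
        have "C / sqrt (real N) \<le> max C 1 / sqrt (real N)" using N by (intro divide_right_mono) auto
        then show "c1 * norm (1 / sqrt (real N)) \<le> norm (f N) \<and> norm (f N) \<le> max C 1 * norm (1 / sqrt (real N))"
          using b pos by auto
      qed
    qed
    then show "(\<lambda>N. measure M {\<omega> \<in> space M. (MAX n\<in>{1..N}. \<Sum>k=1..n. X k \<omega>) \<le> x}) \<in> \<Theta>(\<lambda>N. 1 / sqrt (real N))"
      unfolding f_def by simp
  qed
qed


end
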